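(* In the setting below, with $\mu$ the limit chemical potential and $F=\{z>0\}$, along the subsequence as $\varepsilon\to0^+$: $m(z_\varepsilon)\nabla\mu_\varepsilon\rightharpoonup m(z)\nabla\mu$ weakly in $L^2(F;\mathbb R^n)$, and $m(z_\varepsilon)\nabla\mu_\varepsilon\to0$ strongly in $L^2(\Omega_T\setminus F;\mathbb R^n)$.
   Context: Setting: $\Omega\subseteq\mathbb R^n$ bounded $\mathcal C^2$-domain, $p>n$, $\Omega_T=\Omega\times(0,T)$; $m\in\mathcal C([0,1];[0,\infty))$ with $m(z)=0$ iff $z=0$; $(c_\varepsilon,u_\varepsilon,z_\varepsilon,\mu_\varepsilon)$ solutions of the $\varepsilon$-regularized coupled problem (mobility $m+\varepsilon$), satisfying $\|(m(z_\varepsilon)+\varepsilon)^{1/2}\nabla\mu_\varepsilon\|_{L^2(\Omega_T)}\le C$, $0\le z_\varepsilon\le1$; a subsequence with $z_\varepsilon\to z$ in $\mathcal C(\overline{\Omega_T})$; $F:=\{(x,t)\in\overline{\Omega_T}:z(x,t)>0\}$; $\mu\in L^2_tH^1_{x,\mathrm{loc}}(F)$ is the function with $\mu_\varepsilon\rightharpoonup\mu$ in $L^2(0,t_m;H^1(U^m_k))$ for all $k,m$, where $\{t_m\}$ is dense in $[0,T]$ containing $T$ and $\{U^m_k\}_k$ is a fine representation of $F(t_m)$ (a countable family of open $U_k\subset\subset F(t_m)$ such that each $x\in F(t_m)$ has an open neighborhood $U\subseteq\mathbb R^n$ with $U\cap\Omega\subseteq U_k$ for some $k$). *)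

theory Defs
  imports "HOL-Analysis.Analysis"
begin

text \<open>Points of space-time are pairs (x,t) with x in 'a (= R^n, n = DIM('a)) and t real.
Lebesgue measure on 'a \<times> real is the (n+1)-dimensional Lebesgue measure.\<close>

definition L2_on :: "('b::euclidean_space) set \<Rightarrow> ('b \<Rightarrow> 'c::euclidean_space) \<Rightarrow> bool" where
  "L2_on A f \<longleftrightarrow> f \<in> borel_measurable (lebesgue_on A)
      \<and> integrable (lebesgue_on A) (\<lambda>p. (norm (f p))\<^sup>2)"

definition weak_L2_conv ::
  "('b::euclidean_space) set \<Rightarrow> (nat \<Rightarrow> 'b \<Rightarrow> 'c::euclidean_space) \<Rightarrow> ('b \<Rightarrow> 'c) \<Rightarrow> bool" where
  "weak_L2_conv A fs f \<longleftrightarrow> (\<forall>k. L2_on A (fs k)) \<and> L2_on A f \<and>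
     (\<forall>g. L2_on A g \<longrightarrow>
        (\<lambda>k. \<integral>p. fs k p \<bullet> g p \<partial>lebesgue_on A) \<longlonglongrightarrow> (\<integral>p. f p \<bullet> g p \<partial>lebesgue_on A))"

definition strong_L2_conv ::
  "('b::euclidean_space) set \<Rightarrow> (nat \<Rightarrow> 'b \<Rightarrow> 'c::euclidean_space) \<Rightarrow> ('b \<Rightarrow> 'c) \<Rightarrow> bool" where
  "strong_L2_conv A fs f \<longleftrightarrow> (\<forall>k. L2_on A (fs k)) \<and> L2_on A f \<and>
     (\<lambda>k. \<integral>p. (norm (fs k p - f p))\<^sup>2 \<partial>lebesgue_on A) \<longlonglongrightarrow> 0"

definition test_fun ::
  "('a::euclidean_space \<times> real) set \<Rightarrow> ('a \<times> real \<Rightarrow> real) \<Rightarrow> ('a \<times> real \<Rightarrow> ('a \<times> real) \<Rightarrow>\<^sub>L real) \<Rightarrow> bool" where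
  "test_fun D \<phi> D\<phi> \<longleftrightarrow> (\<forall>p. (\<phi> has_derivative blinfun_apply (D\<phi> p)) (at p))
     \<and> continuous_on UNIV D\<phi>
     \<and> compact (closure {p. \<phi> p \<noteq> 0}) \<and> closure {p. \<phi> p \<noteq> 0} \<subseteq> D"

definition weak_grad_x ::
  "('a::euclidean_space \<times> real) set \<Rightarrow> ('a \<times> real \<Rightarrow> real) \<Rightarrow> ('a \<times> real \<Rightarrow> 'a) \<Rightarrow> bool" where
  "weak_grad_x D u G \<longleftrightarrow> (\<forall>\<phi> D\<phi>. test_fun D \<phi> D\<phi> \<longrightarrow> (\<forall>i\<in>Basis.
      (\<integral>p. u p * blinfun_apply (D\<phi> p) (i, 0) \<partial>lebesgue_on D)
        = - (\<integral>p. (G p \<bullet> i) * \<phi> p \<partial>lebesgue_on D)))"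

definition L2H1 :: "'a::euclidean_space set \<Rightarrow> real \<Rightarrow> ('a \<times> real \<Rightarrow> real) \<Rightarrow> ('a \<times> real \<Rightarrow> 'a) \<Rightarrow> bool" where
  "L2H1 U t u G \<longleftrightarrow> L2_on (U \<times> {0<..<t}) u \<and> L2_on (U \<times> {0<..<t}) G
      \<and> weak_grad_x (U \<times> {0<..<t}) u G"

definition weak_L2H1_conv ::
  "'a::euclidean_space set \<Rightarrow> real \<Rightarrow> (nat \<Rightarrow> 'a \<times> real \<Rightarrow> real) \<Rightarrow> (nat \<Rightarrow> 'a \<times> real \<Rightarrow> 'a)
     \<Rightarrow> ('a \<times> real \<Rightarrow> real) \<Rightarrow> ('a \<times> real \<Rightarrow> 'a) \<Rightarrow> bool" where
  "weak_L2H1_conv U t us Gs u G \<longleftrightarrow> (\<forall>k. L2H1 U t (us k) (Gs k)) \<and> L2H1 U t u G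
     \<and> weak_L2_conv (U \<times> {0<..<t}) us u \<and> weak_L2_conv (U \<times> {0<..<t}) Gs G"

definition C2_domain :: "'a::euclidean_space set \<Rightarrow> bool" where
  "C2_domain \<Omega> \<longleftrightarrow> open \<Omega> \<and> connected \<Omega> \<and>
     (\<exists>\<rho> (D::'a \<Rightarrow> 'a \<Rightarrow>\<^sub>L real) (D2::'a \<Rightarrow> 'a \<Rightarrow>\<^sub>L ('a \<Rightarrow>\<^sub>L real)).
        (\<forall>x. (\<rho> has_derivative blinfun_apply (D x)) (at x))
      \<and> (\<forall>x. (D has_derivative blinfun_apply (D2 x)) (at x))
      \<and> continuous_on UNIV D2
      \<and> \<Omega> = {x. \<rho> x < 0}
      \<and> (\<forall>x. \<rho> x = 0 \<longrightarrow> D x \<noteq> 0))"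

definition fine_rep :: "'a::euclidean_space set \<Rightarrow> 'a set \<Rightarrow> (nat \<Rightarrow> 'a set) \<Rightarrow> bool" where
  "fine_rep \<Omega> S Us \<longleftrightarrow> (\<forall>k. open (Us k) \<and> compact (closure (Us k)) \<and> closure (Us k) \<subseteq> S)
     \<and> (\<forall>x\<in>S. \<exists>V. open V \<and> x \<in> V \<and> (\<exists>k. V \<inter> \<Omega> \<subseteq> Us k))"

end

theory Submission
  imports Defs
begin


definition sqi :: "'b measure \<Rightarrow> ('b \<Rightarrow> 'c::euclidean_space) \<Rightarrow> bool" where
  "sqi M f \<longleftrightarrow> f \<in> borel_measurable M \<and> integrable M (\<lambda>x. (norm (f x))\<^sup>2)"

lemma amgm: fixes a b t :: real assumes "t > 0" shows "a * b \<le> t/2 * a\<^sup>2 + 1/(2*t) * b\<^sup>2"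
proof -
  have "0 \<le> (t*a - b)\<^sup>2" by simp
  hence "2*t*(a*b) \<le> t\<^sup>2 * a\<^sup>2 + b\<^sup>2" by (simp add: power2_eq_square algebra_simps)
  hence "2*t*(a*b) / (2*t) \<le> (t\<^sup>2 * a\<^sup>2 + b\<^sup>2) / (2*t)" using assms by (intro divide_right_mono) auto
  thus ?thesis using assms by (simp add: field_simps power2_eq_square)
qed

lemma sqi_scale:
  assumes "sqi M f" "h \<in> borel_measurable M" "\<forall>x\<in>space M. \<bar>h x\<bar> \<le> B"
  shows "sqi M (\<lambda>x. h x *\<^sub>R f x)"
  unfolding sqi_def
proof
  have [measurable]: "f \<in> borel_measurable M" "h \<in> borel_measurable M" using assms unfolding sqi_def by auto
  show "(\<lambda>x. h x *\<^sub>R f x) \<in> borel_measurable M" by measurable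
  have i: "integrable M (\<lambda>x. B\<^sup>2 * (norm (f x))\<^sup>2)" using assms unfolding sqi_def by auto
  show "integrable M (\<lambda>x. (norm (h x *\<^sub>R f x))\<^sup>2)"
  proof (rule Bochner_Integration.integrable_bound[OF i])
    show "(\<lambda>x. (norm (h x *\<^sub>R f x))\<^sup>2) \<in> borel_measurable M" by measurable
    show "AE x in M. norm ((norm (h x *\<^sub>R f x))\<^sup>2) \<le> norm (B\<^sup>2 * (norm (f x))\<^sup>2)"
    proof (rule AE_I2)
      fix x assume "x \<in> space M"
      hence "\<bar>h x\<bar> \<le> B" using assms by auto
      hence "\<bar>h x\<bar>\<^sup>2 \<le> B\<^sup>2" by (intro power_mono) auto
      hence "(h x)\<^sup>2 \<le> B\<^sup>2" by simp
      thus "norm ((norm (h x *\<^sub>R f x))\<^sup>2) \<le> norm (B\<^sup>2 * (norm (f x))\<^sup>2)"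
        by (simp add: power_mult_distrib mult_right_mono)
    qed
  qed
qed

lemma sqi_add:
  assumes "sqi M f" "sqi M g" shows "sqi M (\<lambda>x. f x + g x)"
  unfolding sqi_def
proof
  have [measurable]: "f \<in> borel_measurable M" "g \<in> borel_measurable M" using assms unfolding sqi_def by auto
  show "(\<lambda>x. f x + g x) \<in> borel_measurable M" by measurable
  have i: "integrable M (\<lambda>x. 2*(norm (f x))\<^sup>2 + 2*(norm (g x))\<^sup>2)" using assms unfolding sqi_def by auto
  show "integrable M (\<lambda>x. (norm (f x + g x))\<^sup>2)"
  proof (rule Bochner_Integration.integrable_bound[OF i])
    show "(\<lambda>x. (norm (f x + g x))\<^sup>2) \<in> borel_measurable M" by measurable
    show "AE x in M. norm ((norm (f x + g x))\<^sup>2) \<le> norm (2*(norm (f x))\<^sup>2 + 2*(norm (g x))\<^sup>2)"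
    proof (rule AE_I2)
      fix x
      have "norm (f x + g x) \<le> norm (f x) + norm (g x)" by (rule norm_triangle_ineq)
      hence "(norm (f x + g x))\<^sup>2 \<le> (norm (f x) + norm (g x))\<^sup>2" by (simp add: power_mono)
      also have "\<dots> \<le> 2*(norm (f x))\<^sup>2 + 2*(norm (g x))\<^sup>2"
      proof -
        have "0 \<le> (norm (f x) - norm (g x))\<^sup>2" by simp
        thus ?thesis by (simp add: power2_eq_square algebra_simps)
      qed
      finally show "norm ((norm (f x + g x))\<^sup>2) \<le> norm (2*(norm (f x))\<^sup>2 + 2*(norm (g x))\<^sup>2)" by simp
    qed
  qed
qed

lemma sqi_diff:
  assumes "sqi M f" "sqi M g" shows "sqi M (\<lambda>x. f x - g x)"
proof -
  have "sqi M (\<lambda>x. (-1::real) *\<^sub>R g x)" by (rule sqi_scale[OF assms(2)]) auto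
  from sqi_add[OF assms(1) this] show ?thesis by simp
qed

lemma weighted_inner:
  assumes f: "sqi M f" and g: "sqi M g" and w: "w \<in> borel_measurable M"
    and wb: "\<forall>x\<in>space M. 0 \<le> w x \<and> w x \<le> B" and t: "t > 0"
  shows "integrable M (\<lambda>x. w x * (f x \<bullet> g x))"
    and "integrable M (\<lambda>x. w x * (norm (f x))\<^sup>2)"
    and "\<bar>\<integral>x. w x * (f x \<bullet> g x) \<partial>M\<bar> \<le> t/2 * (\<integral>x. w x * (norm (f x))\<^sup>2 \<partial>M) + 1/(2*t) * (\<integral>x. w x * (norm (g x))\<^sup>2 \<partial>M)"
proof -
  have fm: "f \<in> borel_measurable M" and fi: "integrable M (\<lambda>x. (norm (f x))\<^sup>2)"
    and gm: "g \<in> borel_measurable M" and gi: "integrable M (\<lambda>x. (norm (g x))\<^sup>2)" using f g unfolding sqi_def by auto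
  have [measurable]: "f \<in> borel_measurable M" "g \<in> borel_measurable M" "w \<in> borel_measurable M" using fm gm w by auto
  have wf: "integrable M (\<lambda>x. w x * (norm (f x))\<^sup>2)"
  proof (rule Bochner_Integration.integrable_bound[OF integrable_mult_right[OF fi, of B]])
    show "(\<lambda>x. w x * (norm (f x))\<^sup>2) \<in> borel_measurable M" by measurable
    show "AE x in M. norm (w x * (norm (f x))\<^sup>2) \<le> norm (B * (norm (f x))\<^sup>2)"
    proof (rule AE_I2)
      fix x assume x: "x \<in> space M"
      have "\<bar>w x\<bar> \<le> \<bar>B\<bar>" using wb x by force
      thus "norm (w x * (norm (f x))\<^sup>2) \<le> norm (B * (norm (f x))\<^sup>2)"
        by (simp add: abs_mult mult_right_mono)
    qed
  qed
  have wg: "integrable M (\<lambda>x. w x * (norm (g x))\<^sup>2)"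
  proof (rule Bochner_Integration.integrable_bound[OF integrable_mult_right[OF gi, of B]])
    show "(\<lambda>x. w x * (norm (g x))\<^sup>2) \<in> borel_measurable M" by measurable
    show "AE x in M. norm (w x * (norm (g x))\<^sup>2) \<le> norm (B * (norm (g x))\<^sup>2)"
    proof (rule AE_I2)
      fix x assume x: "x \<in> space M"
      have "\<bar>w x\<bar> \<le> \<bar>B\<bar>" using wb x by force
      thus "norm (w x * (norm (g x))\<^sup>2) \<le> norm (B * (norm (g x))\<^sup>2)"
        by (simp add: abs_mult mult_right_mono)
    qed
  qed
  show "integrable M (\<lambda>x. w x * (norm (f x))\<^sup>2)" by (rule wf)
  have pw: "\<bar>w x * (f x \<bullet> g x)\<bar> \<le> t/2 * (w x * (norm (f x))\<^sup>2) + 1/(2*t) * (w x * (norm (g x))\<^sup>2)"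
    if "x \<in> space M" for x
  proof -
    have w0: "0 \<le> w x" using wb that by auto
    have "\<bar>w x * (f x \<bullet> g x)\<bar> = w x * \<bar>f x \<bullet> g x\<bar>" using w0 by (simp add: abs_mult)
    also have "\<dots> \<le> w x * (norm (f x) * norm (g x))" using w0 by (intro mult_left_mono Cauchy_Schwarz_ineq2) auto
    also have "\<dots> \<le> w x * (t/2 * (norm (f x))\<^sup>2 + 1/(2*t) * (norm (g x))\<^sup>2)" using w0 amgm[OF t] by (intro mult_left_mono) auto
    also have "\<dots> = t/2 * (w x * (norm (f x))\<^sup>2) + 1/(2*t) * (w x * (norm (g x))\<^sup>2)" by (simp add: algebra_simps)
    finally show ?thesis .
  qed
  have bi: "integrable M (\<lambda>x. t/2 * (w x * (norm (f x))\<^sup>2) + 1/(2*t) * (w x * (norm (g x))\<^sup>2))"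
    using wf wg by auto
  show ii: "integrable M (\<lambda>x. w x * (f x \<bullet> g x))"
  proof (rule Bochner_Integration.integrable_bound[OF bi])
    show "(\<lambda>x. w x * (f x \<bullet> g x)) \<in> borel_measurable M" by measurable
    show "AE x in M. norm (w x * (f x \<bullet> g x)) \<le> norm (t/2 * (w x * (norm (f x))\<^sup>2) + 1/(2*t) * (w x * (norm (g x))\<^sup>2))"
      by (rule AE_I2) (use pw in \<open>force\<close>)
  qed
  have "\<bar>\<integral>x. w x * (f x \<bullet> g x) \<partial>M\<bar> \<le> (\<integral>x. \<bar>w x * (f x \<bullet> g x)\<bar> \<partial>M)" by (rule integral_abs_bound)
  also have "\<dots> \<le> (\<integral>x. t/2 * (w x * (norm (f x))\<^sup>2) + 1/(2*t) * (w x * (norm (g x))\<^sup>2) \<partial>M)"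
    by (rule integral_mono) (use ii bi pw in \<open>auto intro: integrable_abs\<close>)
  also have "\<dots> = t/2 * (\<integral>x. w x * (norm (f x))\<^sup>2 \<partial>M) + 1/(2*t) * (\<integral>x. w x * (norm (g x))\<^sup>2 \<partial>M)"
    using wf wg by simp
  finally show "\<bar>\<integral>x. w x * (f x \<bullet> g x) \<partial>M\<bar> \<le> t/2 * (\<integral>x. w x * (norm (f x))\<^sup>2 \<partial>M) + 1/(2*t) * (\<integral>x. w x * (norm (g x))\<^sup>2 \<partial>M)" .
qed


lemma small_inner:
  assumes f: "sqi M f" and g: "sqi M g" and r: "r \<in> borel_measurable M"
    and rb: "\<forall>x\<in>space M. \<bar>r x\<bar> \<le> \<eta>"
  shows "integrable M (\<lambda>x. r x * (f x \<bullet> g x))"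
    and "\<bar>\<integral>x. r x * (f x \<bullet> g x) \<partial>M\<bar> \<le> \<eta>/2 * ((\<integral>x. (norm (f x))\<^sup>2 \<partial>M) + (\<integral>x. (norm (g x))\<^sup>2 \<partial>M))"
proof -
  have fm: "f \<in> borel_measurable M" and fi: "integrable M (\<lambda>x. (norm (f x))\<^sup>2)"
    and gm: "g \<in> borel_measurable M" and gi: "integrable M (\<lambda>x. (norm (g x))\<^sup>2)" using f g unfolding sqi_def by auto
  have [measurable]: "f \<in> borel_measurable M" "g \<in> borel_measurable M" "r \<in> borel_measurable M" using fm gm r by auto
  have pw: "\<bar>r x * (f x \<bullet> g x)\<bar> \<le> \<eta>/2 * ((norm (f x))\<^sup>2 + (norm (g x))\<^sup>2)" if "x \<in> space M" for x
  proof -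
    have r0: "\<bar>r x\<bar> \<le> \<eta>" using rb that by auto
    have "\<bar>r x * (f x \<bullet> g x)\<bar> = \<bar>r x\<bar> * \<bar>f x \<bullet> g x\<bar>" by (simp add: abs_mult)
    also have "\<dots> \<le> \<eta> * (norm (f x) * norm (g x))"
      by (intro mult_mono r0 Cauchy_Schwarz_ineq2) (use r0 in auto)
    also have "\<dots> \<le> \<eta> * (1/2 * (norm (f x))\<^sup>2 + 1/(2*1) * (norm (g x))\<^sup>2)"
      using r0 amgm[of 1 "norm (f x)" "norm (g x)"] by (intro mult_left_mono) auto
    also have "\<dots> = \<eta>/2 * ((norm (f x))\<^sup>2 + (norm (g x))\<^sup>2)" by (simp add: algebra_simps)
    finally show ?thesis .
  qed
  have bi: "integrable M (\<lambda>x. \<eta>/2 * ((norm (f x))\<^sup>2 + (norm (g x))\<^sup>2))" using fi gi by auto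
  show ii: "integrable M (\<lambda>x. r x * (f x \<bullet> g x))"
  proof (rule Bochner_Integration.integrable_bound[OF bi])
    show "(\<lambda>x. r x * (f x \<bullet> g x)) \<in> borel_measurable M" by measurable
    show "AE x in M. norm (r x * (f x \<bullet> g x)) \<le> norm (\<eta>/2 * ((norm (f x))\<^sup>2 + (norm (g x))\<^sup>2))"
      by (rule AE_I2) (use pw in \<open>force\<close>)
  qed
  have "\<bar>\<integral>x. r x * (f x \<bullet> g x) \<partial>M\<bar> \<le> (\<integral>x. \<bar>r x * (f x \<bullet> g x)\<bar> \<partial>M)" by (rule integral_abs_bound)
  also have "\<dots> \<le> (\<integral>x. \<eta>/2 * ((norm (f x))\<^sup>2 + (norm (g x))\<^sup>2) \<partial>M)"
    by (rule integral_mono) (use ii bi pw in \<open>auto intro: integrable_abs\<close>)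
  also have "\<dots> = \<eta>/2 * ((\<integral>x. (norm (f x))\<^sup>2 \<partial>M) + (\<integral>x. (norm (g x))\<^sup>2 \<partial>M))"
    using fi gi by simp
  finally show "\<bar>\<integral>x. r x * (f x \<bullet> g x) \<partial>M\<bar> \<le> \<eta>/2 * ((\<integral>x. (norm (f x))\<^sup>2 \<partial>M) + (\<integral>x. (norm (g x))\<^sup>2 \<partial>M))" .
qed

lemma sqi_integrable_norm: "sqi M f \<Longrightarrow> integrable M (\<lambda>x. (norm (f x))\<^sup>2)"
  unfolding sqi_def by auto

lemma sqi_inner_int: "sqi M f \<Longrightarrow> sqi M g \<Longrightarrow> integrable M (\<lambda>x. f x \<bullet> g x)"
  using weighted_inner(1)[of M f g "\<lambda>_. 1" 1 1] by simp




lemma lo_restrict: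
  assumes "S \<in> sets lebesgue" "A \<in> sets lebesgue" "A \<subseteq> S"
  shows "restrict_space (lebesgue_on S) A = lebesgue_on A"
proof -
  have "restrict_space (lebesgue_on S) A = restrict_space lebesgue (S \<inter> A)"
    by (rule restrict_restrict_space) (use assms in auto)
  also have "S \<inter> A = A" using assms by auto
  finally show ?thesis .
qed

lemma lo_sets: "S \<in> sets lebesgue \<Longrightarrow> A \<in> sets lebesgue \<Longrightarrow> A \<subseteq> S \<Longrightarrow> A \<in> sets (lebesgue_on S)"
  by (simp add: sets_restrict_space_iff)

lemma zero_out_meas:
  fixes \<psi> :: "'a::euclidean_space \<Rightarrow> 'b::real_normed_vector"
  assumes "S1 \<in> sets lebesgue" "S2 \<in> sets lebesgue" "\<forall>p. p \<notin> S1 \<inter> S2 \<longrightarrow> \<psi> p = 0"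
    and "\<psi> \<in> borel_measurable (lebesgue_on S1)"
  shows "\<psi> \<in> borel_measurable (lebesgue_on S2)"
proof -
  have e1: "(\<lambda>x. indicator S1 x *\<^sub>R \<psi> x) = \<psi>" using assms(3) by (auto simp: fun_eq_iff indicator_def)
  have e2: "(\<lambda>x. indicator S2 x *\<^sub>R \<psi> x) = \<psi>" using assms(3) by (auto simp: fun_eq_iff indicator_def)
  have "\<psi> \<in> borel_measurable lebesgue"
    using assms(4) borel_measurable_restrict_space_iff[of S1 lebesgue \<psi>] assms(1) e1 by simp
  thus ?thesis using borel_measurable_restrict_space_iff[of S2 lebesgue \<psi>] assms(2) e2 by simp
qed

lemma zero_out_int:
  fixes \<psi> :: "'a::euclidean_space \<Rightarrow> 'b::{banach, second_countable_topology}"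
  assumes "S1 \<in> sets lebesgue" "S2 \<in> sets lebesgue" "\<forall>p. p \<notin> S1 \<inter> S2 \<longrightarrow> \<psi> p = 0"
  shows "integrable (lebesgue_on S1) \<psi> \<longleftrightarrow> integrable (lebesgue_on S2) \<psi>"
    and "integral\<^sup>L (lebesgue_on S1) \<psi> = integral\<^sup>L (lebesgue_on S2) \<psi>"
proof -
  have e1: "(\<lambda>x. indicator S1 x *\<^sub>R \<psi> x) = \<psi>" using assms(3) by (auto simp: fun_eq_iff indicator_def)
  have e2: "(\<lambda>x. indicator S2 x *\<^sub>R \<psi> x) = \<psi>" using assms(3) by (auto simp: fun_eq_iff indicator_def)
  show "integrable (lebesgue_on S1) \<psi> \<longleftrightarrow> integrable (lebesgue_on S2) \<psi>"
    using integrable_restrict_space[of S1 lebesgue \<psi>] integrable_restrict_space[of S2 lebesgue \<psi>] assms e1 e2 by simp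
  show "integral\<^sup>L (lebesgue_on S1) \<psi> = integral\<^sup>L (lebesgue_on S2) \<psi>"
    using integral_restrict_space[of S1 lebesgue \<psi>] integral_restrict_space[of S2 lebesgue \<psi>] assms e1 e2 by simp
qed

lemma zero_out_sqi:
  fixes \<psi> :: "'a::euclidean_space \<Rightarrow> 'c::euclidean_space"
  assumes "S1 \<in> sets lebesgue" "S2 \<in> sets lebesgue" "\<forall>p. p \<notin> S1 \<inter> S2 \<longrightarrow> \<psi> p = 0"
    and "sqi (lebesgue_on S1) \<psi>"
  shows "sqi (lebesgue_on S2) \<psi>"
proof -
  have z: "\<forall>p. p \<notin> S1 \<inter> S2 \<longrightarrow> (norm (\<psi> p))\<^sup>2 = 0" using assms(3) by auto
  have m: "\<psi> \<in> borel_measurable (lebesgue_on S1)" and i: "integrable (lebesgue_on S1) (\<lambda>x. (norm (\<psi> x))\<^sup>2)"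
    using assms(4) unfolding sqi_def by auto
  have m2: "\<psi> \<in> borel_measurable (lebesgue_on S2)" by (rule zero_out_meas[OF assms(1-3) m])
  have i2: "integrable (lebesgue_on S2) (\<lambda>x. (norm (\<psi> x))\<^sup>2)" using zero_out_int(1)[OF assms(1,2) z] i by blast
  show ?thesis unfolding sqi_def using m2 i2 by blast
qed

lemma restr_int:
  fixes \<psi> :: "'a::euclidean_space \<Rightarrow> 'b::{banach, second_countable_topology}"
  assumes "S \<in> sets lebesgue" "A \<in> sets lebesgue" "A \<subseteq> S"
  shows "integrable (lebesgue_on A) \<psi> \<longleftrightarrow> integrable (lebesgue_on S) (\<lambda>x. indicator A x *\<^sub>R \<psi> x)"
    and "integral\<^sup>L (lebesgue_on A) \<psi> = integral\<^sup>L (lebesgue_on S) (\<lambda>x. indicator A x *\<^sub>R \<psi> x)"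
  using integrable_restrict_space[of A "lebesgue_on S" \<psi>] integral_restrict_space[of A "lebesgue_on S" \<psi>]
    lo_restrict[OF assms] lo_sets[OF assms] by auto

lemma restr_meas:
  fixes \<psi> :: "'a::euclidean_space \<Rightarrow> 'b::real_normed_vector"
  assumes "S \<in> sets lebesgue" "A \<in> sets lebesgue" "A \<subseteq> S"
  shows "\<psi> \<in> borel_measurable (lebesgue_on A) \<longleftrightarrow> (\<lambda>x. indicator A x *\<^sub>R \<psi> x) \<in> borel_measurable (lebesgue_on S)"
  using borel_measurable_restrict_space_iff[of A "lebesgue_on S" \<psi>] lo_restrict[OF assms] lo_sets[OF assms] by auto

lemma restr_sqi:
  fixes \<psi> :: "'a::euclidean_space \<Rightarrow> 'c::euclidean_space"
  assumes "S \<in> sets lebesgue" "A \<in> sets lebesgue" "A \<subseteq> S"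
  shows "sqi (lebesgue_on A) \<psi> \<longleftrightarrow> sqi (lebesgue_on S) (\<lambda>x. indicator A x *\<^sub>R \<psi> x)"
proof -
  have e: "(\<lambda>x. (norm (indicator A x *\<^sub>R \<psi> x))\<^sup>2) = (\<lambda>x. indicator A x *\<^sub>R (norm (\<psi> x))\<^sup>2)"
    by (auto simp: fun_eq_iff indicator_def)
  show ?thesis unfolding sqi_def using restr_meas[OF assms, of \<psi>] restr_int(1)[OF assms, of "\<lambda>x. (norm (\<psi> x))\<^sup>2"] e
    by simp
qed

lemma sqi_restrict:
  fixes \<psi> :: "'a::euclidean_space \<Rightarrow> 'c::euclidean_space"
  assumes "S \<in> sets lebesgue" "A \<in> sets lebesgue" "A \<subseteq> S" "sqi (lebesgue_on S) \<psi>"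
  shows "sqi (lebesgue_on A) \<psi>"
proof -
  have "sqi (lebesgue_on S) (\<lambda>x. indicator A x *\<^sub>R \<psi> x)"
    by (rule sqi_scale[OF assms(4) borel_measurable_indicator[OF lo_sets[OF assms(1-3)]], where B=1]) (auto simp: indicator_def)
  thus ?thesis using restr_sqi[OF assms(1-3), of \<psi>] by blast
qed

lemma LIMSEQ_eps:
  fixes a :: "nat \<Rightarrow> real"
  assumes "\<And>e. e > 0 \<Longrightarrow> eventually (\<lambda>k. \<bar>a k - L\<bar> \<le> e) sequentially"
  shows "a \<longlonglongrightarrow> L"
proof (rule tendstoI)
  fix e :: real assume "e > 0"
  hence "e/2 > 0" by simp
  from assms[OF this] show "eventually (\<lambda>k. dist (a k) L < e) sequentially"
    by eventually_elim (use \<open>e > 0\<close> in \<open>auto simp: dist_real_def\<close>)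
qed




locale msetup =
  fixes \<Omega> :: "'a::euclidean_space set"
    and T C :: real
    and m :: "real \<Rightarrow> real"
    and eps :: "nat \<Rightarrow> real"
    and zs :: "nat \<Rightarrow> 'a \<times> real \<Rightarrow> real" and z :: "'a \<times> real \<Rightarrow> real"
    and mus :: "nat \<Rightarrow> 'a \<times> real \<Rightarrow> real" and Gs :: "nat \<Rightarrow> 'a \<times> real \<Rightarrow> 'a"
    and mu :: "'a \<times> real \<Rightarrow> real" and G :: "'a \<times> real \<Rightarrow> 'a"
    and ts :: "nat \<Rightarrow> real" and U :: "nat \<Rightarrow> nat \<Rightarrow> 'a set"
    and \<Omega>T F :: "('a \<times> real) set"
  assumes dom: "C2_domain \<Omega>" "bounded \<Omega>"
    and T: "T > 0"
    and \<Omega>T_def: "\<Omega>T = \<Omega> \<times> {0<..<T}"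
    and m_cont: "continuous_on {0..1} m"
    and m_nonneg: "\<forall>s\<in>{0..1}. m s \<ge> 0"
    and m_zero: "\<forall>s\<in>{0..1}. m s = 0 \<longleftrightarrow> s = 0"
    and eps_pos: "\<forall>k. eps k > 0" and eps_lim: "eps \<longlonglongrightarrow> 0"
    and zs_cont: "\<forall>k. continuous_on (closure \<Omega>T) (zs k)"
    and zs_range: "\<forall>k. \<forall>p\<in>closure \<Omega>T. 0 \<le> zs k p \<and> zs k p \<le> 1"
    and zs_lim: "uniform_limit (closure \<Omega>T) zs z sequentially"
    and mus_reg: "\<forall>k. L2H1 \<Omega> T (mus k) (Gs k)"
    and bound: "\<forall>k. (\<integral>p. (m (zs k p) + eps k) * (norm (Gs k p))\<^sup>2 \<partial>lebesgue_on \<Omega>T) \<le> C\<^sup>2"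
    and F_def: "F = {p \<in> closure \<Omega>T. z p > 0}"
    and ts_range: "range ts \<subseteq> {0..T}" and ts_dense: "{0..T} \<subseteq> closure (range ts)"
    and ts_T: "T \<in> range ts"
    and U_fine: "\<forall>j. fine_rep \<Omega> {x. (x, ts j) \<in> F} (U j)"
    and mu_lim: "\<forall>j k. weak_L2H1_conv (U j k) (ts j) mus Gs mu G"
begin

abbreviation "N \<equiv> lebesgue_on \<Omega>T"

lemma OT_open: "open \<Omega>T"
  using dom(1) unfolding C2_domain_def \<Omega>T_def by (auto intro: open_Times)

lemma OT_sets[simp]: "\<Omega>T \<in> sets lebesgue"
  using OT_open by auto

lemma z_cont: "continuous_on (closure \<Omega>T) z"
  by (rule uniform_limit_theorem[OF _ zs_lim]) (use zs_cont in auto)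

lemma z01: assumes "p \<in> closure \<Omega>T" shows "0 \<le> z p" "z p \<le> 1"
proof -
  have l: "(\<lambda>k. zs k p) \<longlonglongrightarrow> z p" by (rule tendsto_uniform_limitI[OF zs_lim assms])
  show "0 \<le> z p" by (rule tendsto_lowerbound[OF l]) (use zs_range assms in auto)
  show "z p \<le> 1" by (rule tendsto_upperbound[OF l]) (use zs_range assms in auto)
qed

definition "Mx = (SOME B::real. 0 \<le> B \<and> (\<forall>s\<in>{0..1}. m s \<le> B))"

lemma Mx: "0 \<le> Mx" "s \<in> {0..1} \<Longrightarrow> m s \<le> Mx"
proof -
  have "compact (m ` {0..1})" by (rule compact_continuous_image[OF m_cont]) simp
  then obtain B where B: "\<forall>y\<in>m ` {0..1}. norm y \<le> B" using compact_imp_bounded bounded_iff by metis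
  have "\<exists>B::real. 0 \<le> B \<and> (\<forall>s\<in>{0..1}. m s \<le> B)"
    using B by (intro exI[of _ "\<bar>B\<bar>"]) force
  from someI_ex[OF this] show "0 \<le> Mx" "s \<in> {0..1} \<Longrightarrow> m s \<le> Mx" unfolding Mx_def by auto
qed

lemma zs_unif: "e > 0 \<Longrightarrow> eventually (\<lambda>k. \<forall>p\<in>closure \<Omega>T. \<bar>zs k p - z p\<bar> < e) sequentially"
  using uniform_limitD[OF zs_lim] by (simp add: dist_real_def)

lemma w_unif: assumes "e > 0"
  shows "eventually (\<lambda>k. \<forall>p\<in>closure \<Omega>T. \<bar>m (zs k p) - m (z p)\<bar> < e) sequentially"
proof -
  have "uniformly_continuous_on {0..1} m" by (rule compact_uniformly_continuous[OF m_cont]) simp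
  then obtain d where d: "d > 0" "\<And>x y. x \<in> {0..1} \<Longrightarrow> y \<in> {0..1} \<Longrightarrow> dist y x < d \<Longrightarrow> dist (m y) (m x) < e"
    using assms unfolding uniformly_continuous_on_def by metis
  show ?thesis using zs_unif[OF d(1)]
  proof eventually_elim
    case (elim k)
    show ?case
    proof
      fix p assume p: "p \<in> closure \<Omega>T"
      have "dist (m (zs k p)) (m (z p)) < e"
        by (rule d(2)) (use elim p zs_range z01[OF p] in \<open>auto simp: dist_real_def\<close>)
      thus "\<bar>m (zs k p) - m (z p)\<bar> < e" by (simp add: dist_real_def)
    qed
  qed
qed

lemma OT_closure: "p \<in> \<Omega>T \<Longrightarrow> p \<in> closure \<Omega>T"
  using closure_subset by blast

lemma wk01: "p \<in> closure \<Omega>T \<Longrightarrow> 0 \<le> m (zs k p) \<and> m (zs k p) \<le> Mx"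
  using zs_range m_nonneg Mx(2) by auto

lemma w01: "p \<in> closure \<Omega>T \<Longrightarrow> 0 \<le> m (z p) \<and> m (z p) \<le> Mx"
  using z01 m_nonneg Mx(2) by auto

lemma cont_wk: "continuous_on (closure \<Omega>T) (\<lambda>p. m (zs k p))"
  by (rule continuous_on_compose2[OF m_cont]) (use zs_cont zs_range in auto)

lemma cont_w: "continuous_on (closure \<Omega>T) (\<lambda>p. m (z p))"
  by (rule continuous_on_compose2[OF m_cont z_cont]) (use z01 in auto)

lemma meas_wk[measurable]: "(\<lambda>p. m (zs k p)) \<in> borel_measurable N"
  by (rule continuous_imp_measurable_on_sets_lebesgue[OF continuous_on_subset[OF cont_wk closure_subset]]) simp

lemma meas_w[measurable]: "(\<lambda>p. m (z p)) \<in> borel_measurable N"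
  by (rule continuous_imp_measurable_on_sets_lebesgue[OF continuous_on_subset[OF cont_w closure_subset]]) simp

lemma meas_z[measurable]: "z \<in> borel_measurable N"
  by (rule continuous_imp_measurable_on_sets_lebesgue[OF continuous_on_subset[OF z_cont closure_subset]]) simp

lemma sqi_Gs: "sqi N (Gs k)"
  using mus_reg unfolding L2H1_def L2_on_def sqi_def \<Omega>T_def by blast

lemma meas_Gs[measurable]: "Gs k \<in> borel_measurable N"
  using sqi_Gs unfolding sqi_def by blast

lemma wbound: "integrable N (\<lambda>p. m (zs k p) * (norm (Gs k p))\<^sup>2)"
  "(\<integral>p. m (zs k p) * (norm (Gs k p))\<^sup>2 \<partial>N) \<le> C\<^sup>2"
proof -
  have i: "integrable N (\<lambda>p. (norm (Gs k p))\<^sup>2)" using sqi_Gs unfolding sqi_def by blast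
  have e: "0 < eps k" using eps_pos by auto
  have sp: "p \<in> space N \<Longrightarrow> p \<in> closure \<Omega>T" for p using OT_closure by simp
  show i1: "integrable N (\<lambda>p. m (zs k p) * (norm (Gs k p))\<^sup>2)"
  proof (rule Bochner_Integration.integrable_bound[OF integrable_mult_right[OF i, of Mx]])
    show "(\<lambda>p. m (zs k p) * (norm (Gs k p))\<^sup>2) \<in> borel_measurable N" by measurable
    show "AE x in N. norm (m (zs k x) * (norm (Gs k x))\<^sup>2) \<le> norm (Mx * (norm (Gs k x))\<^sup>2)"
    proof (rule AE_I2)
      fix x assume "x \<in> space N"
      hence "0 \<le> m (zs k x) \<and> m (zs k x) \<le> Mx" using wk01 sp by blast
      hence "\<bar>m (zs k x)\<bar> \<le> \<bar>Mx\<bar>" by linarith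
      thus "norm (m (zs k x) * (norm (Gs k x))\<^sup>2) \<le> norm (Mx * (norm (Gs k x))\<^sup>2)"
        by (simp add: abs_mult mult_right_mono)
    qed
  qed
  have "(\<integral>p. m (zs k p) * (norm (Gs k p))\<^sup>2 \<partial>N) \<le> (\<integral>p. (m (zs k p) + eps k) * (norm (Gs k p))\<^sup>2 \<partial>N)"
  proof (rule integral_mono)
    show "integrable N (\<lambda>p. (m (zs k p) + eps k) * (norm (Gs k p))\<^sup>2)"
      using i1 i by (simp add: distrib_right)
  qed (use i1 e in \<open>auto simp: distrib_right\<close>)
  also have "\<dots> \<le> C\<^sup>2" using bound by auto
  finally show "(\<integral>p. m (zs k p) * (norm (Gs k p))\<^sup>2 \<partial>N) \<le> C\<^sup>2" .
qed

end



context msetup begin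

definition "A = {p \<in> \<Omega>T. 0 < z p}"

lemma A_open: "open A"
proof -
  have "open (\<Omega>T \<inter> z -` {0<..})"
    by (rule continuous_open_preimage[OF continuous_on_subset[OF z_cont closure_subset] OT_open]) auto
  moreover have "\<Omega>T \<inter> z -` {0<..} = A" unfolding A_def by auto
  ultimately show ?thesis by simp
qed

lemma A_sets[simp]: "A \<in> sets lebesgue" using A_open by auto
lemma A_sub: "A \<subseteq> \<Omega>T" unfolding A_def by auto
lemma FA: "F \<inter> \<Omega>T = A" unfolding A_def F_def using closure_subset by auto
lemma S0_sets[simp]: "\<Omega>T - F \<in> sets lebesgue"
proof -
  have "\<Omega>T - F = \<Omega>T - A" using FA by auto
  thus ?thesis using sets.Diff[OF OT_sets A_sets] by simp
qed

lemma sqi_wG: "sqi N (\<lambda>p. m (zs k p) *\<^sub>R Gs k p)"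
  by (rule sqi_scale[OF sqi_Gs meas_wk, where B=Mx]) (use wk01 OT_closure in force)

lemma strong_part: "strong_L2_conv (\<Omega>T - F) (\<lambda>k p. m (zs k p) *\<^sub>R Gs k p) (\<lambda>p. 0)"
  unfolding strong_L2_conv_def L2_on_def
proof (intro conjI allI)
  have S0: "\<Omega>T - F \<subseteq> \<Omega>T" by auto
  fix k
  show "(\<lambda>p. m (zs k p) *\<^sub>R Gs k p) \<in> borel_measurable (lebesgue_on (\<Omega>T - F))"
    "integrable (lebesgue_on (\<Omega>T - F)) (\<lambda>p. (norm (m (zs k p) *\<^sub>R Gs k p))\<^sup>2)"
    using sqi_restrict[OF OT_sets S0_sets S0 sqi_wG] unfolding sqi_def by auto
next
  show "(\<lambda>p. 0::'a) \<in> borel_measurable (lebesgue_on (\<Omega>T - F))" by simp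
  show "integrable (lebesgue_on (\<Omega>T - F)) (\<lambda>p. (norm (0::'a))\<^sup>2)" by simp
next
  have S0: "\<Omega>T - F \<subseteq> \<Omega>T" by auto
  show "(\<lambda>k. \<integral>p. (norm (m (zs k p) *\<^sub>R Gs k p - 0))\<^sup>2 \<partial>lebesgue_on (\<Omega>T - F)) \<longlonglongrightarrow> 0"
  proof (rule LIMSEQ_eps)
    fix e :: real assume e: "e > 0"
    define e' where "e' = e / (C\<^sup>2 + 1)"
    have Cp: "C\<^sup>2 + 1 > 0" by (simp add: add_nonneg_pos)
    have e'pos: "e' > 0" using e Cp unfolding e'_def by (simp add: divide_pos_pos)
    have m0: "m 0 = 0" using m_zero by auto
    obtain d where d: "d > 0" "\<And>s. s \<in> {0..1} \<Longrightarrow> dist s 0 < d \<Longrightarrow> dist (m s) (m 0) < e'"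
      using m_cont e'pos unfolding continuous_on_iff by (metis atLeastAtMost_iff order_refl zero_le_one)
    show "eventually (\<lambda>k. \<bar>(\<integral>p. (norm (m (zs k p) *\<^sub>R Gs k p - 0))\<^sup>2 \<partial>lebesgue_on (\<Omega>T - F)) - 0\<bar> \<le> e) sequentially"
      using zs_unif[OF d(1)]
    proof eventually_elim
      case (elim k)
      let ?h = "\<lambda>p. indicator (\<Omega>T - F) p *\<^sub>R (norm (m (zs k p) *\<^sub>R Gs k p - 0))\<^sup>2"
      have eq: "(\<integral>p. (norm (m (zs k p) *\<^sub>R Gs k p - 0))\<^sup>2 \<partial>lebesgue_on (\<Omega>T - F)) = integral\<^sup>L N ?h"
        by (rule restr_int(2)[OF OT_sets S0_sets S0])
      have pw: "0 \<le> ?h p \<and> ?h p \<le> e' * (m (zs k p) * (norm (Gs k p))\<^sup>2)" if p: "p \<in> \<Omega>T" for p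
      proof (cases "p \<in> F")
        case True thus ?thesis using wk01[OF OT_closure[OF p], of k] e'pos by auto
      next
        case False
        have pc: "p \<in> closure \<Omega>T" using OT_closure[OF p] .
        have "z p = 0" using False z01[OF pc] pc unfolding F_def by auto
        hence "zs k p < d" using elim pc by auto
        hence "dist (m (zs k p)) (m 0) < e'" using zs_range pc by (intro d(2)) (auto simp: dist_real_def)
        hence lt: "m (zs k p) \<le> e'" using m0 by (simp add: dist_real_def)
        have w0: "0 \<le> m (zs k p)" using wk01[OF pc] by auto
        have "?h p = m (zs k p) * (m (zs k p) * (norm (Gs k p))\<^sup>2)" using False p
          by (simp add: power2_eq_square)
        also have "\<dots> \<le> e' * (m (zs k p) * (norm (Gs k p))\<^sup>2)"
          by (rule mult_right_mono[OF lt]) (use w0 in simp)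
        finally show ?thesis using False p w0 by simp
      qed
      have S0N: "\<Omega>T - F \<in> sets N" by (rule lo_sets) auto
      have gm: "(\<lambda>x. (norm (m (zs k x) *\<^sub>R Gs k x - 0))\<^sup>2) \<in> borel_measurable N"
        using sqi_wG[of k] unfolding sqi_def by simp
      have hm: "?h \<in> borel_measurable N" by (intro borel_measurable_scaleR borel_measurable_indicator S0N gm)
      have ib: "integrable N (\<lambda>p. e' * (m (zs k p) * (norm (Gs k p))\<^sup>2))" using wbound(1) by simp
      have hi: "integrable N ?h"
      proof (rule Bochner_Integration.integrable_bound[OF ib hm], rule AE_I2)
        fix p assume "p \<in> space N"
        hence "p \<in> \<Omega>T" by simp
        from pw[OF this] show "norm (?h p) \<le> norm (e' * (m (zs k p) * (norm (Gs k p))\<^sup>2))"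
          by (metis abs_of_nonneg order_trans real_norm_def)
      qed
      have "integral\<^sup>L N ?h \<le> (\<integral>p. e' * (m (zs k p) * (norm (Gs k p))\<^sup>2) \<partial>N)"
        by (rule integral_mono[OF hi ib]) (use pw in auto)
      also have "\<dots> = e' * (\<integral>p. m (zs k p) * (norm (Gs k p))\<^sup>2 \<partial>N)" by simp
      also have "\<dots> \<le> e' * C\<^sup>2" using wbound(2) e'pos by (intro mult_left_mono) auto
      also have "\<dots> \<le> e" unfolding e'_def using e Cp by (simp add: field_simps)
      finally have up: "integral\<^sup>L N ?h \<le> e" .
      have "0 \<le> integral\<^sup>L N ?h" by (rule integral_nonneg_AE) (rule AE_I2, use pw in auto)
      thus ?case using eq up by simp
    qed
  qed
qed

end



context msetup begin

definition "Q j k = U j k \<times> {0<..<ts j}"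
definition "Qn n = Q (fst (prod_decode n)) (snd (prod_decode n))"
definition "D = disjointed (\<lambda>n. A \<inter> Qn n)"
definition "Z \<delta> = {p \<in> \<Omega>T. \<delta> \<le> z p}"
definition "E n \<delta> = (\<Union>i<n. D i) \<inter> Z \<delta>"

lemma weakQ: "weak_L2_conv (Q j k) Gs G"
  using mu_lim unfolding weak_L2H1_conv_def Q_def by blast

lemma Q_open: "open (Q j k)"
  using U_fine unfolding fine_rep_def Q_def by (auto intro: open_Times)

lemma Q_sets[simp]: "Q j k \<in> sets lebesgue" using Q_open by auto

lemma Qn_sets[simp]: "Qn n \<in> sets lebesgue" unfolding Qn_def by simp

lemma weakQn: "weak_L2_conv (Qn n) Gs G" unfolding Qn_def by (rule weakQ)

lemma cover: "A \<subseteq> (\<Union>j k. Q j k)"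
proof
  fix p assume pA: "p \<in> A"
  obtain x t where p: "p = (x, t)" by (cases p)
  have pO: "p \<in> \<Omega>T" and zp: "0 < z p" using pA unfolding A_def by auto
  have x: "x \<in> \<Omega>" and t: "0 < t" "t < T" using pO p unfolding \<Omega>T_def by auto
  have "\<forall>x\<in>closure \<Omega>T. \<forall>e>0. \<exists>d>0. \<forall>x'\<in>closure \<Omega>T. dist x' x < d \<longrightarrow> dist (z x') (z x) < e"
    using z_cont unfolding continuous_on_iff .
  hence "\<exists>d>0. \<forall>x'\<in>closure \<Omega>T. dist x' p < d \<longrightarrow> dist (z x') (z p) < z p"
    using zp OT_closure[OF pO] by blast
  then obtain r where r: "r > 0" "\<And>q. q \<in> closure \<Omega>T \<Longrightarrow> dist q p < r \<Longrightarrow> dist (z q) (z p) < z p"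
    by blast
  define b where "b = min T (t + r)"
  have tb: "t < b" using t r unfolding b_def by auto
  define t' where "t' = (t + b) / 2"
  have "t' \<in> {0..T}" using tb t unfolding t'_def b_def by auto
  hence "t' \<in> closure (range ts)" using ts_dense by auto
  moreover have "(b - t)/2 > 0" using tb by simp
  ultimately obtain s where s: "s \<in> range ts" "dist s t' < (b - t)/2"
    unfolding closure_approachable by blast
  then obtain j where j: "s = ts j" by auto
  have "\<bar>s - t'\<bar> < (b - t)/2" using s(2) unfolding dist_real_def by simp
  hence h: "s - (t + b) / 2 < (b - t) / 2" "- (s - (t + b) / 2) < (b - t) / 2" unfolding t'_def abs_less_iff by auto
  have st: "t < s" "s < b" using h by (simp_all add: field_simps)
  have sT: "0 < s" "s < T" using st t unfolding b_def by auto
  have qO: "(x, s) \<in> \<Omega>T" using x sT unfolding \<Omega>T_def by auto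
  have "dist (x, s) p = dist s t" using p by (simp add: dist_Pair_Pair)
  also have "\<dots> < r" using st unfolding b_def dist_real_def by auto
  finally have "dist (z (x, s)) (z p) < z p" by (rule r(2)[OF OT_closure[OF qO]])
  hence "z (x, s) > 0" unfolding dist_real_def by auto
  hence "(x, ts j) \<in> F" using qO j OT_closure unfolding F_def by auto
  hence xF: "x \<in> {x. (x, ts j) \<in> F}" by simp
  have "fine_rep \<Omega> {x. (x, ts j) \<in> F} (U j)" using U_fine by blast
  hence "\<forall>x\<in>{x. (x, ts j) \<in> F}. \<exists>V. open V \<and> x \<in> V \<and> (\<exists>k. V \<inter> \<Omega> \<subseteq> U j k)"
    unfolding fine_rep_def by (rule conjunct2)
  then obtain V k where "open V" "x \<in> V" "V \<inter> \<Omega> \<subseteq> U j k"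
    using xF by blast
  hence "x \<in> U j k" using x by auto
  hence "p \<in> Q j k" using p st t j unfolding Q_def by auto
  thus "p \<in> (\<Union>j k. Q j k)" by auto
qed

lemma cover_n: "A \<subseteq> (\<Union>n. Qn n)"
proof
  fix p assume "p \<in> A"
  hence "p \<in> (\<Union>j k. Q j k)" using cover by blast
  then obtain j k where jk: "p \<in> Q j k" by blast
  have "Qn (prod_encode (j, k)) = Q j k" unfolding Qn_def by simp
  hence "p \<in> Qn (prod_encode (j, k))" using jk by simp
  thus "p \<in> (\<Union>n. Qn n)" by blast
qed

lemma D_sub: "D n \<subseteq> A \<inter> Qn n" unfolding D_def by (rule disjointed_subset)

lemma D_sets[simp]: "D n \<in> sets lebesgue"
proof -
  have "range (\<lambda>n. A \<inter> Qn n) \<subseteq> sets lebesgue" using sets.Int[OF A_sets Qn_sets] by blast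
  from sets.range_disjointed_sets[OF this] show ?thesis unfolding D_def by (simp add: image_subset_iff)
qed

lemma D_union: "(\<Union>n. D n) = A"
proof -
  have "(\<Union>n. D n) = (\<Union>n. A \<inter> Qn n)" unfolding D_def by (rule UN_disjointed_eq)
  also have "\<dots> = A" using cover_n by blast
  finally show ?thesis .
qed

lemma D_disj: assumes "i \<noteq> n" shows "D i \<inter> D n = {}"
proof (cases "i < n")
  case True thus ?thesis unfolding D_def by (rule less_disjoint_disjointed)
next
  case False hence "n < i" using assms by simp
  hence "D n \<inter> D i = {}" unfolding D_def by (rule less_disjoint_disjointed)
  thus ?thesis by (simp add: Int_commute)
qed

lemma Z_sets[simp]: "Z \<delta> \<in> sets lebesgue"
proof -
  have "open (\<Omega>T \<inter> z -` {..<\<delta>})"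
    by (rule continuous_open_preimage[OF continuous_on_subset[OF z_cont closure_subset] OT_open]) auto
  hence "\<Omega>T \<inter> z -` {..<\<delta>} \<in> sets lebesgue" by auto
  moreover have "Z \<delta> = \<Omega>T - (\<Omega>T \<inter> z -` {..<\<delta>})" unfolding Z_def by auto
  ultimately show ?thesis using sets.Diff[OF OT_sets] by metis
qed

lemma E_sets[simp]: "E n \<delta> \<in> sets lebesgue"
  unfolding E_def by (rule sets.Int, rule sets.finite_UN) auto

lemma E_sub: "E n \<delta> \<subseteq> A" unfolding E_def using D_sub by auto
lemma E_subO: "E n \<delta> \<subseteq> \<Omega>T" using E_sub A_sub by auto

lemma sqi_G_piece:
  assumes "S \<in> sets lebesgue" "S \<subseteq> D i"
  shows "sqi N (\<lambda>p. indicator S p *\<^sub>R G p)"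
proof -
  have "sqi (lebesgue_on (Qn i)) G" using weakQn[of i] unfolding weak_L2_conv_def L2_on_def sqi_def by blast
  hence "sqi (lebesgue_on S) G" by (rule sqi_restrict[rotated 3]) (use assms D_sub in auto)
  thus ?thesis using restr_sqi[OF OT_sets assms(1)] assms D_sub A_sub by blast
qed

lemma sqi_G_union:
  assumes "S \<in> sets lebesgue" "S \<subseteq> (\<Union>i<n. D i)"
  shows "sqi N (\<lambda>p. indicator S p *\<^sub>R G p)"
  using assms
proof (induction n arbitrary: S)
  case 0
  hence "S = {}" by auto
  thus ?case unfolding sqi_def by simp
next
  case (Suc n)
  have s1: "S \<inter> D n \<in> sets lebesgue" "S - D n \<in> sets lebesgue" using Suc.prems by auto
  have "S - D n \<subseteq> (\<Union>i<n. D i)" using Suc.prems(2) by (auto simp: lessThan_Suc)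
  hence a: "sqi N (\<lambda>p. indicator (S - D n) p *\<^sub>R G p)" by (rule Suc.IH[OF s1(2)])
  have b: "sqi N (\<lambda>p. indicator (S \<inter> D n) p *\<^sub>R G p)" by (rule sqi_G_piece[OF s1(1)]) auto
  have eq: "(\<lambda>p. indicator S p *\<^sub>R G p) = (\<lambda>p. indicator (S \<inter> D n) p *\<^sub>R G p + indicator (S - D n) p *\<^sub>R G p)"
    by (auto simp: fun_eq_iff indicator_def)
  show ?case unfolding eq by (rule sqi_add[OF b a])
qed

lemma sqi_GE: "sqi N (\<lambda>p. indicator (E n \<delta>) p *\<^sub>R G p)"
  by (rule sqi_G_union[OF E_sets]) (auto simp: E_def)

lemma weak_piece:
  assumes "sqi N \<phi>" "\<forall>p. p \<notin> D i \<longrightarrow> \<phi> p = 0"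
  shows "integrable N (\<lambda>p. G p \<bullet> \<phi> p)" "(\<lambda>k. \<integral>p. Gs k p \<bullet> \<phi> p \<partial>N) \<longlonglongrightarrow> (\<integral>p. G p \<bullet> \<phi> p \<partial>N)"
proof -
  have van: "\<forall>p. p \<notin> \<Omega>T \<inter> Qn i \<longrightarrow> \<phi> p = 0" using assms(2) D_sub A_sub by blast
  have sq: "sqi (lebesgue_on (Qn i)) \<phi>" by (rule zero_out_sqi[OF OT_sets Qn_sets van assms(1)])
  have w: "weak_L2_conv (Qn i) Gs G" by (rule weakQn)
  have sG: "sqi (lebesgue_on (Qn i)) G" using w unfolding weak_L2_conv_def L2_on_def sqi_def by blast
  have lim: "(\<lambda>k. \<integral>p. Gs k p \<bullet> \<phi> p \<partial>lebesgue_on (Qn i)) \<longlonglongrightarrow> (\<integral>p. G p \<bullet> \<phi> p \<partial>lebesgue_on (Qn i))"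
    using w sq unfolding weak_L2_conv_def L2_on_def sqi_def by blast
  have v2: "\<forall>p. p \<notin> \<Omega>T \<inter> Qn i \<longrightarrow> H p \<bullet> \<phi> p = 0" for H :: "'a \<times> real \<Rightarrow> 'a" using van by simp
  have iq: "integrable (lebesgue_on (Qn i)) (\<lambda>p. G p \<bullet> \<phi> p)" by (rule sqi_inner_int[OF sG sq])
  show "integrable N (\<lambda>p. G p \<bullet> \<phi> p)" using zero_out_int(1)[OF OT_sets Qn_sets v2[of G]] iq by blast
  show "(\<lambda>k. \<integral>p. Gs k p \<bullet> \<phi> p \<partial>N) \<longlonglongrightarrow> (\<integral>p. G p \<bullet> \<phi> p \<partial>N)"
    using lim zero_out_int(2)[OF OT_sets Qn_sets v2] by simp
qed

lemma weak_union:
  assumes "sqi N \<phi>" "\<forall>p. p \<notin> (\<Union>i<n. D i) \<longrightarrow> \<phi> p = 0"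
  shows "integrable N (\<lambda>p. G p \<bullet> \<phi> p) \<and> (\<lambda>k. \<integral>p. Gs k p \<bullet> \<phi> p \<partial>N) \<longlonglongrightarrow> (\<integral>p. G p \<bullet> \<phi> p \<partial>N)"
  using assms
proof (induction n arbitrary: \<phi>)
  case 0
  hence "\<phi> = (\<lambda>p. 0)" by auto
  thus ?case by simp
next
  case (Suc n)
  define \<phi>1 where "\<phi>1 = (\<lambda>p. indicator (D n) p *\<^sub>R \<phi> p)"
  define \<phi>2 where "\<phi>2 = (\<lambda>p. indicator (- D n) p *\<^sub>R \<phi> p)"
  have DN1: "D n \<in> sets N" by (rule lo_sets) (use D_sub A_sub in auto)
  have "- D n \<inter> \<Omega>T = \<Omega>T - D n" by auto
  hence "- D n \<inter> \<Omega>T \<in> sets lebesgue" using sets.Diff[OF OT_sets D_sets] by simp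
  hence DN2: "- D n \<inter> \<Omega>T \<in> sets N" by (intro lo_sets) auto
  note DN = DN1 DN2
  have s1: "sqi N \<phi>1" unfolding \<phi>1_def
    by (rule sqi_scale[OF Suc.prems(1) borel_measurable_indicator[OF DN(1)], where B=1]) (auto simp: indicator_def)
  have mi: "(indicator (- D n) :: _ \<Rightarrow> real) \<in> borel_measurable N"
  proof -
    have e: "indicator (- D n) = (\<lambda>p. 1 - indicator (D n) p :: real)" by (auto simp: fun_eq_iff indicator_def)
    have "(\<lambda>p. 1 - indicator (D n) p :: real) \<in> borel_measurable N"
      by (intro borel_measurable_diff borel_measurable_const borel_measurable_indicator[OF DN(1)])
    thus ?thesis using e by simp
  qed
  have s2: "sqi N \<phi>2" unfolding \<phi>2_def
    by (rule sqi_scale[OF Suc.prems(1) mi, where B=1]) (auto simp: indicator_def)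
  have v1: "\<forall>p. p \<notin> D n \<longrightarrow> \<phi>1 p = 0" unfolding \<phi>1_def by auto
  have v2: "\<forall>p. p \<notin> (\<Union>i<n. D i) \<longrightarrow> \<phi>2 p = 0" using Suc.prems(2) unfolding \<phi>2_def by (auto simp: lessThan_Suc indicator_def)
  note P1 = weak_piece[OF s1 v1]
  note P2 = Suc.IH[OF s2 v2]
  have eq: "\<phi> = (\<lambda>p. \<phi>1 p + \<phi>2 p)" unfolding \<phi>1_def \<phi>2_def by (auto simp: fun_eq_iff indicator_def)
  have ig: "integrable N (\<lambda>p. Gs k p \<bullet> \<phi>1 p)" "integrable N (\<lambda>p. Gs k p \<bullet> \<phi>2 p)" for k
    using sqi_inner_int[OF sqi_Gs s1] sqi_inner_int[OF sqi_Gs s2] by auto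
  have e1: "(\<integral>p. Gs k p \<bullet> \<phi> p \<partial>N) = (\<integral>p. Gs k p \<bullet> \<phi>1 p \<partial>N) + (\<integral>p. Gs k p \<bullet> \<phi>2 p \<partial>N)" for k
    by (subst eq) (simp add: inner_add_right Bochner_Integration.integral_add[OF ig])
  have e2: "(\<integral>p. G p \<bullet> \<phi> p \<partial>N) = (\<integral>p. G p \<bullet> \<phi>1 p \<partial>N) + (\<integral>p. G p \<bullet> \<phi>2 p \<partial>N)"
    by (subst eq) (simp add: inner_add_right Bochner_Integration.integral_add[OF P1(1) conjunct1[OF P2]])
  have "integrable N (\<lambda>p. G p \<bullet> \<phi> p)" by (subst eq) (simp add: inner_add_right P1(1) conjunct1[OF P2])
  moreover have "(\<lambda>k. \<integral>p. Gs k p \<bullet> \<phi> p \<partial>N) \<longlonglongrightarrow> (\<integral>p. G p \<bullet> \<phi> p \<partial>N)"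
    unfolding e1 e2 by (rule tendsto_add[OF P1(2) conjunct2[OF P2]])
  ultimately show ?case by blast
qed

lemma weak_E:
  assumes "sqi N \<phi>" "\<forall>p. p \<notin> E n \<delta> \<longrightarrow> \<phi> p = 0"
  shows "integrable N (\<lambda>p. G p \<bullet> \<phi> p)" "(\<lambda>k. \<integral>p. Gs k p \<bullet> \<phi> p \<partial>N) \<longlonglongrightarrow> (\<integral>p. G p \<bullet> \<phi> p \<partial>N)"
proof -
  have "\<forall>p. p \<notin> (\<Union>i<n. D i) \<longrightarrow> \<phi> p = 0" using assms(2) unfolding E_def by blast
  from weak_union[OF assms(1) this]
  show "integrable N (\<lambda>p. G p \<bullet> \<phi> p)" "(\<lambda>k. \<integral>p. Gs k p \<bullet> \<phi> p \<partial>N) \<longlonglongrightarrow> (\<integral>p. G p \<bullet> \<phi> p \<partial>N)"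
    by blast+
qed

end



context msetup begin

lemma sqi_ind:
  assumes "S \<in> sets lebesgue" "S \<subseteq> \<Omega>T" "sqi N f"
  shows "sqi N (\<lambda>p. indicator S p *\<^sub>R f p)"
proof -
  have "S \<in> sets N" by (rule lo_sets[OF OT_sets assms(1,2)])
  thus ?thesis by (intro sqi_scale[OF assms(3) borel_measurable_indicator, where B=1]) (auto simp: indicator_def)
qed

lemma Z_sub: "Z \<delta> \<subseteq> \<Omega>T" unfolding Z_def by auto

lemma lowbound:
  assumes "\<delta> > 0"
  shows "\<exists>c>0. eventually (\<lambda>k. \<forall>p\<in>Z \<delta>. c \<le> m (zs k p)) sequentially"
proof -
  define a where "a = min (\<delta>/2) 1"
  have a: "0 < a" "a \<le> 1" "a \<le> \<delta>/2" using assms unfolding a_def by auto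
  have "continuous_on {a..1} m" by (rule continuous_on_subset[OF m_cont]) (use a in auto)
  then obtain x0 where x0: "x0 \<in> {a..1}" "\<forall>y\<in>{a..1}. m x0 \<le> m y"
    using continuous_attains_inf[of "{a..1}" m] a by auto
  have x01: "x0 \<in> {0..1}" "x0 \<noteq> 0" using x0(1) a by auto
  have "m x0 \<noteq> 0" using m_zero x01 by blast
  moreover have "m x0 \<ge> 0" using m_nonneg x01 by blast
  ultimately have c: "m x0 > 0" by simp
  have hd: "\<delta>/2 > 0" using assms by simp
  have "eventually (\<lambda>k. \<forall>p\<in>Z \<delta>. m x0 \<le> m (zs k p)) sequentially"
    using zs_unif[OF hd]
  proof eventually_elim
    case (elim k)
    show ?case
    proof
      fix p assume p: "p \<in> Z \<delta>"
      have pO: "p \<in> \<Omega>T" and zp: "\<delta> \<le> z p" using p unfolding Z_def by auto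
      have pc: "p \<in> closure \<Omega>T" by (rule OT_closure[OF pO])
      have "\<bar>zs k p - z p\<bar> < \<delta>/2" using elim pc by blast
      hence "a \<le> zs k p" using zp a by linarith
      moreover have "zs k p \<le> 1" using zs_range pc by blast
      ultimately show "m x0 \<le> m (zs k p)" using x0(2) by auto
    qed
  qed
  thus ?thesis using c by blast
qed

lemma Gs_bound:
  assumes "\<delta> > 0"
  shows "\<exists>B\<ge>0. eventually (\<lambda>k. (\<integral>p. (norm (indicator (Z \<delta>) p *\<^sub>R Gs k p))\<^sup>2 \<partial>N) \<le> B) sequentially"
proof -
  obtain c where c: "c > 0" "eventually (\<lambda>k. \<forall>p\<in>Z \<delta>. c \<le> m (zs k p)) sequentially"
    using lowbound[OF assms] by blast
  have "eventually (\<lambda>k. (\<integral>p. (norm (indicator (Z \<delta>) p *\<^sub>R Gs k p))\<^sup>2 \<partial>N) \<le> C\<^sup>2 / c) sequentially"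
    using c(2)
  proof eventually_elim
    case (elim k)
    have s: "sqi N (\<lambda>p. indicator (Z \<delta>) p *\<^sub>R Gs k p)" by (rule sqi_ind[OF Z_sets Z_sub sqi_Gs])
    have i1: "integrable N (\<lambda>p. (norm (indicator (Z \<delta>) p *\<^sub>R Gs k p))\<^sup>2)" using s unfolding sqi_def by blast
    have i2: "integrable N (\<lambda>p. (1/c) * (m (zs k p) * (norm (Gs k p))\<^sup>2))" using wbound(1) by simp
    have pw: "(norm (indicator (Z \<delta>) p *\<^sub>R Gs k p))\<^sup>2 \<le> (1/c) * (m (zs k p) * (norm (Gs k p))\<^sup>2)"
      if p: "p \<in> \<Omega>T" for p
    proof (cases "p \<in> Z \<delta>")
      case True
      have "c \<le> m (zs k p)" using elim True by blast
      hence "1 \<le> (1/c) * m (zs k p)" using c(1) by (simp add: field_simps)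
      hence "1 * (norm (Gs k p))\<^sup>2 \<le> ((1/c) * m (zs k p)) * (norm (Gs k p))\<^sup>2"
        by (intro mult_right_mono) auto
      thus ?thesis using True by simp
    next
      case False
      have "0 \<le> m (zs k p)" using wk01[OF OT_closure[OF p]] by blast
      thus ?thesis using False c(1) by simp
    qed
    have "(\<integral>p. (norm (indicator (Z \<delta>) p *\<^sub>R Gs k p))\<^sup>2 \<partial>N) \<le> (\<integral>p. (1/c) * (m (zs k p) * (norm (Gs k p))\<^sup>2) \<partial>N)"
      by (rule integral_mono[OF i1 i2]) (use pw in simp)
    also have "\<dots> = (1/c) * (\<integral>p. m (zs k p) * (norm (Gs k p))\<^sup>2 \<partial>N)" by simp
    also have "\<dots> \<le> (1/c) * C\<^sup>2" using wbound(2) c(1) by (intro mult_left_mono) auto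
    finally show ?case by simp
  qed
  moreover have "C\<^sup>2 / c \<ge> 0" using c(1) by simp
  ultimately show ?thesis by blast
qed

lemma w_abs: "\<forall>p\<in>space N. \<bar>m (z p)\<bar> \<le> Mx"
proof
  fix p assume "p \<in> space N"
  hence "p \<in> closure \<Omega>T" using OT_closure by simp
  from w01[OF this] show "\<bar>m (z p)\<bar> \<le> Mx" by linarith
qed

lemma wk_abs: "\<forall>p\<in>space N. \<bar>m (zs k p)\<bar> \<le> Mx"
proof
  fix p assume "p \<in> space N"
  hence "p \<in> closure \<Omega>T" using OT_closure by simp
  from wk01[OF this, of k] show "\<bar>m (zs k p)\<bar> \<le> Mx" by linarith
qed

lemma sqi_wphi: "sqi N \<phi> \<Longrightarrow> sqi N (\<lambda>p. m (z p) *\<^sub>R \<phi> p)"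
  by (rule sqi_scale[OF _ meas_w w_abs])

lemma weak_w:
  assumes d: "\<delta> > 0" and phi: "sqi N \<phi>" and van: "\<forall>p. p \<notin> E n \<delta> \<longrightarrow> \<phi> p = 0"
  shows "integrable N (\<lambda>p. m (z p) * (G p \<bullet> \<phi> p))"
    "(\<lambda>k. \<integral>p. m (zs k p) * (Gs k p \<bullet> \<phi> p) \<partial>N) \<longlonglongrightarrow> (\<integral>p. m (z p) * (G p \<bullet> \<phi> p) \<partial>N)"
proof -
  define \<psi> where "\<psi> = (\<lambda>p. m (z p) *\<^sub>R \<phi> p)"
  have s\<psi>: "sqi N \<psi>" unfolding \<psi>_def by (rule sqi_wphi[OF phi])
  have v\<psi>: "\<forall>p. p \<notin> E n \<delta> \<longrightarrow> \<psi> p = 0" using van unfolding \<psi>_def by simp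
  note WE = weak_E[OF s\<psi> v\<psi>]
  have eG: "(\<lambda>p. G p \<bullet> \<psi> p) = (\<lambda>p. m (z p) * (G p \<bullet> \<phi> p))" unfolding \<psi>_def by simp
  show "integrable N (\<lambda>p. m (z p) * (G p \<bullet> \<phi> p))" using WE(1) unfolding eG .
  define HG where "HG = (\<lambda>k p. indicator (Z \<delta>) p *\<^sub>R Gs k p)"
  have sHG: "sqi N (HG k)" for k unfolding HG_def by (rule sqi_ind[OF Z_sets Z_sub sqi_Gs])
  define r where "r = (\<lambda>k p. m (zs k p) - m (z p))"
  have rm: "r k \<in> borel_measurable N" for k unfolding r_def by measurable
  have rb: "\<forall>p\<in>space N. \<bar>r k p\<bar> \<le> Mx" for k
  proof
    fix p assume "p \<in> space N"
    hence pc: "p \<in> closure \<Omega>T" using OT_closure by simp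
    show "\<bar>r k p\<bar> \<le> Mx" using wk01[OF pc, of k] w01[OF pc] unfolding r_def by linarith
  qed
  have pw: "m (zs k p) * (Gs k p \<bullet> \<phi> p) = Gs k p \<bullet> \<psi> p + r k p * (HG k p \<bullet> \<phi> p)" for k p
  proof (cases "\<phi> p = 0")
    case True thus ?thesis unfolding \<psi>_def by simp
  next
    case False
    hence "p \<in> Z \<delta>" using van unfolding E_def by blast
    thus ?thesis unfolding \<psi>_def HG_def r_def by (simp add: algebra_simps)
  qed
  have i1: "integrable N (\<lambda>p. Gs k p \<bullet> \<psi> p)" for k by (rule sqi_inner_int[OF sqi_Gs s\<psi>])
  have i2: "integrable N (\<lambda>p. r k p * (HG k p \<bullet> \<phi> p))" for k by (rule small_inner(1)[OF sHG phi rm rb])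
  have split: "(\<integral>p. m (zs k p) * (Gs k p \<bullet> \<phi> p) \<partial>N) = (\<integral>p. Gs k p \<bullet> \<psi> p \<partial>N) + (\<integral>p. r k p * (HG k p \<bullet> \<phi> p) \<partial>N)" for k
    unfolding pw by (rule Bochner_Integration.integral_add[OF i1 i2])
  have t2: "(\<lambda>k. \<integral>p. r k p * (HG k p \<bullet> \<phi> p) \<partial>N) \<longlonglongrightarrow> 0"
  proof (rule LIMSEQ_eps)
    fix e :: real assume e: "e > 0"
    obtain B where B: "B \<ge> 0" "eventually (\<lambda>k. (\<integral>p. (norm (HG k p))\<^sup>2 \<partial>N) \<le> B) sequentially"
      using Gs_bound[OF d] unfolding HG_def by blast
    define I where "I = (\<integral>p. (norm (\<phi> p))\<^sup>2 \<partial>N)"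
    have I0: "I \<ge> 0" unfolding I_def by simp
    define \<eta> where "\<eta> = e / (B + I + 1)"
    have BI: "B + I + 1 > 0" using B(1) I0 by simp
    have \<eta>: "\<eta> > 0" unfolding \<eta>_def using e BI by simp
    show "eventually (\<lambda>k. \<bar>(\<integral>p. r k p * (HG k p \<bullet> \<phi> p) \<partial>N) - 0\<bar> \<le> e) sequentially"
      using B(2) w_unif[OF \<eta>]
    proof eventually_elim
      case (elim k)
      have rb': "\<forall>p\<in>space N. \<bar>r k p\<bar> \<le> \<eta>"
      proof
        fix p assume "p \<in> space N"
        hence pc: "p \<in> closure \<Omega>T" using OT_closure by simp
        show "\<bar>r k p\<bar> \<le> \<eta>" using elim(2) pc unfolding r_def by fastforce
      qed
      have "\<bar>\<integral>p. r k p * (HG k p \<bullet> \<phi> p) \<partial>N\<bar> \<le> \<eta>/2 * ((\<integral>p. (norm (HG k p))\<^sup>2 \<partial>N) + I)"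
        unfolding I_def by (rule small_inner(2)[OF sHG phi rm rb'])
      also have "\<dots> \<le> \<eta>/2 * (B + I)" using elim(1) \<eta> by (intro mult_left_mono) auto
      also have "\<dots> \<le> \<eta> * (B + I + 1)" using \<eta> B(1) I0 by (simp add: field_simps)
      also have "\<dots> = e" unfolding \<eta>_def using BI by simp
      finally show ?case by simp
    qed
  qed
  have "(\<lambda>k. (\<integral>p. Gs k p \<bullet> \<psi> p \<partial>N) + (\<integral>p. r k p * (HG k p \<bullet> \<phi> p) \<partial>N)) \<longlonglongrightarrow> (\<integral>p. G p \<bullet> \<psi> p \<partial>N) + 0"
    by (rule tendsto_add[OF WE(2) t2])
  thus "(\<lambda>k. \<integral>p. m (zs k p) * (Gs k p \<bullet> \<phi> p) \<partial>N) \<longlonglongrightarrow> (\<integral>p. m (z p) * (G p \<bullet> \<phi> p) \<partial>N)"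
    unfolding split eG by simp
qed

end



context msetup begin

lemma wk_b: "\<forall>p\<in>space N. 0 \<le> m (zs k p) \<and> m (zs k p) \<le> Mx"
  using wk01 OT_closure by simp

lemma w_b: "\<forall>p\<in>space N. 0 \<le> m (z p) \<and> m (z p) \<le> Mx"
  using w01 OT_closure by simp

lemma limbound:
  assumes d: "\<delta> > 0"
  shows "(\<integral>p. m (z p) * (norm (indicator (E n \<delta>) p *\<^sub>R G p))\<^sup>2 \<partial>N) \<le> C\<^sup>2"
proof -
  define \<phi> where "\<phi> = (\<lambda>p. indicator (E n \<delta>) p *\<^sub>R G p)"
  have s\<phi>: "sqi N \<phi>" unfolding \<phi>_def by (rule sqi_GE)
  have van: "\<forall>p. p \<notin> E n \<delta> \<longrightarrow> \<phi> p = 0" unfolding \<phi>_def by simp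
  note WW = weak_w[OF d s\<phi> van]
  have gp: "G p \<bullet> \<phi> p = (norm (\<phi> p))\<^sup>2" for p
    by (cases "p \<in> E n \<delta>") (simp_all add: \<phi>_def power2_norm_eq_inner)
  define X where "X = (\<integral>p. m (z p) * (norm (\<phi> p))\<^sup>2 \<partial>N)"
  have a: "(\<lambda>k. \<integral>p. m (zs k p) * (Gs k p \<bullet> \<phi> p) \<partial>N) \<longlonglongrightarrow> X"
    using WW(2) unfolding gp X_def .
  have ab: "(\<integral>p. m (zs k p) * (Gs k p \<bullet> \<phi> p) \<partial>N) \<le> C\<^sup>2/2 + 1/2 * (\<integral>p. m (zs k p) * (norm (\<phi> p))\<^sup>2 \<partial>N)" for k
  proof -
    have "\<bar>\<integral>p. m (zs k p) * (Gs k p \<bullet> \<phi> p) \<partial>N\<bar> \<le> 1/2 * (\<integral>p. m (zs k p) * (norm (Gs k p))\<^sup>2 \<partial>N) + 1/(2*1) * (\<integral>p. m (zs k p) * (norm (\<phi> p))\<^sup>2 \<partial>N)"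
      by (rule weighted_inner(3)[OF sqi_Gs s\<phi> meas_wk wk_b]) simp
    moreover have "(\<integral>p. m (zs k p) * (norm (Gs k p))\<^sup>2 \<partial>N) \<le> C\<^sup>2" by (rule wbound(2))
    ultimately show ?thesis by linarith
  qed
  have I0: "(\<integral>p. (norm (\<phi> p))\<^sup>2 \<partial>N) \<ge> 0" by simp
  define I where "I = (\<integral>p. (norm (\<phi> p))\<^sup>2 \<partial>N)"
  have b: "(\<lambda>k. \<integral>p. m (zs k p) * (norm (\<phi> p))\<^sup>2 \<partial>N) \<longlonglongrightarrow> X"
  proof (rule LIMSEQ_eps)
    fix e :: real assume e: "e > 0"
    define \<eta> where "\<eta> = e / (I + 1)"
    have I1: "I + 1 > 0" using I0 unfolding I_def by linarith
    have \<eta>: "\<eta> > 0" unfolding \<eta>_def using e I1 by simp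
    show "eventually (\<lambda>k. \<bar>(\<integral>p. m (zs k p) * (norm (\<phi> p))\<^sup>2 \<partial>N) - X\<bar> \<le> e) sequentially"
      using w_unif[OF \<eta>]
    proof eventually_elim
      case (elim k)
      define r where "r = (\<lambda>p. m (zs k p) - m (z p))"
      have rm: "r \<in> borel_measurable N" unfolding r_def by measurable
      have rb: "\<forall>p\<in>space N. \<bar>r p\<bar> \<le> \<eta>"
      proof
        fix p assume "p \<in> space N"
        hence pc: "p \<in> closure \<Omega>T" using OT_closure by simp
        show "\<bar>r p\<bar> \<le> \<eta>" using elim pc unfolding r_def by fastforce
      qed
      have i1: "integrable N (\<lambda>p. m (zs k p) * (norm (\<phi> p))\<^sup>2)"
        by (rule weighted_inner(2)[OF s\<phi> s\<phi> meas_wk wk_b, of 1]) simp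
      have i2: "integrable N (\<lambda>p. m (z p) * (norm (\<phi> p))\<^sup>2)"
        by (rule weighted_inner(2)[OF s\<phi> s\<phi> meas_w w_b, of 1]) simp
      have i3: "integrable N (\<lambda>p. r p * (\<phi> p \<bullet> \<phi> p))" by (rule small_inner(1)[OF s\<phi> s\<phi> rm rb])
      have pw: "m (zs k p) * (norm (\<phi> p))\<^sup>2 = m (z p) * (norm (\<phi> p))\<^sup>2 + r p * (\<phi> p \<bullet> \<phi> p)" for p
        unfolding r_def power2_norm_eq_inner by (simp add: algebra_simps)
      have "(\<integral>p. m (zs k p) * (norm (\<phi> p))\<^sup>2 \<partial>N) - X = (\<integral>p. r p * (\<phi> p \<bullet> \<phi> p) \<partial>N)"
        unfolding pw X_def using Bochner_Integration.integral_add[OF i2 i3] by simp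
      moreover have "\<bar>\<integral>p. r p * (\<phi> p \<bullet> \<phi> p) \<partial>N\<bar> \<le> \<eta>/2 * (I + I)"
        unfolding I_def by (rule small_inner(2)[OF s\<phi> s\<phi> rm rb])
      moreover have "\<eta>/2 * (I + I) \<le> e"
      proof -
        have "\<eta>/2 * (I + I) = \<eta> * I" by simp
        also have "\<dots> \<le> \<eta> * (I + 1)" using \<eta> by simp
        also have "\<dots> = e" unfolding \<eta>_def using I1 by simp
        finally show ?thesis .
      qed
      ultimately show ?case by simp
    qed
  qed
  have b2: "(\<lambda>k. C\<^sup>2/2 + 1/2 * (\<integral>p. m (zs k p) * (norm (\<phi> p))\<^sup>2 \<partial>N)) \<longlonglongrightarrow> C\<^sup>2/2 + 1/2 * X"
    by (intro tendsto_intros b)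
  have "X \<le> C\<^sup>2/2 + 1/2 * X" by (rule LIMSEQ_le[OF a b2]) (use ab in auto)
  hence "X \<le> C\<^sup>2" by simp
  thus ?thesis unfolding X_def \<phi>_def .
qed

end



context msetup begin

lemma space_LA: "space (lebesgue_on A) = A" by simp

lemma G_meas_A: "G \<in> borel_measurable (lebesgue_on A)"
proof (rule measurable_piecewise_restrict[where C="range D"])
  show "countable (range D)" by simp
  show "S \<inter> space (lebesgue_on A) \<in> sets (lebesgue_on A)" if S: "S \<in> range D" for S
  proof -
    obtain i where i: "S = D i" using S by blast
    have "D i \<subseteq> A" using D_sub by blast
    hence "D i \<inter> A = D i" by blast
    thus ?thesis using i lo_sets[OF A_sets D_sets \<open>D i \<subseteq> A\<close>] by simp
  qed
  show "space (lebesgue_on A) \<subseteq> \<Union> (range D)" using D_union by simp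
  show "G \<in> restrict_space (lebesgue_on A) S \<rightarrow>\<^sub>M borel" if S: "S \<in> range D" for S
  proof -
    obtain i where i: "S = D i" using S by blast
    have sub: "D i \<subseteq> A" using D_sub by blast
    have "sqi (lebesgue_on (Qn i)) G" using weakQn[of i] unfolding weak_L2_conv_def L2_on_def sqi_def by blast
    hence "sqi (lebesgue_on (D i)) G" by (rule sqi_restrict[rotated 3]) (use D_sub in auto)
    hence "G \<in> borel_measurable (lebesgue_on (D i))" unfolding sqi_def by blast
    thus ?thesis using i lo_restrict[OF A_sets D_sets sub] by simp
  qed
qed

lemma w_meas_A: "(\<lambda>p. m (z p)) \<in> borel_measurable (lebesgue_on A)"
  by (rule continuous_imp_measurable_on_sets_lebesgue[OF continuous_on_subset[OF cont_w]])
     (use A_sub closure_subset in auto)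

definition "Ej j = E j (1 / real (Suc j))"

lemma Ej_mono: "Ej j \<subseteq> Ej (Suc j)"
proof
  fix p assume "p \<in> Ej j"
  hence p: "p \<in> (\<Union>i<j. D i)" "p \<in> \<Omega>T" "1 / real (Suc j) \<le> z p" unfolding Ej_def E_def Z_def by auto
  have "1 / real (Suc (Suc j)) \<le> 1 / real (Suc j)" by (simp add: frac_le)
  hence "1 / real (Suc (Suc j)) \<le> z p" using p(3) by linarith
  moreover have "p \<in> (\<Union>i<Suc j. D i)" using p(1) by auto
  ultimately show "p \<in> Ej (Suc j)" using p(2) unfolding Ej_def E_def Z_def by auto
qed

lemma Ej_sub: "Ej j \<subseteq> A" unfolding Ej_def by (rule E_sub)

lemma Ej_ev: assumes "p \<in> A" shows "eventually (\<lambda>j. p \<in> Ej j) sequentially"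
proof -
  obtain i where i: "p \<in> D i" using assms D_union by blast
  have zp: "z p > 0" and pO: "p \<in> \<Omega>T" using assms unfolding A_def by auto
  obtain J where J: "J > 0" "inverse (real J) < z p" using ex_inverse_of_nat_less[OF zp] by blast
  show ?thesis
  proof (rule eventually_sequentiallyI[of "max J (Suc i)"])
    fix j assume j: "max J (Suc i) \<le> j"
    have "1 / real (Suc j) \<le> inverse (real J)"
      using j J(1) by (simp add: inverse_eq_divide frac_le)
    hence "1 / real (Suc j) \<le> z p" using J(2) by linarith
    moreover have "p \<in> (\<Union>i<j. D i)" using i j by auto
    ultimately show "p \<in> Ej j" using pO unfolding Ej_def E_def Z_def by auto
  qed
qed

definition "gG p = m (z p) * (norm (G p))\<^sup>2"
definition "uG p = indicator A p * gG p"

lemma uG_int: "integrable N uG"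
proof -
  define f where "f = (\<lambda>j p. m (z p) * (norm (indicator (Ej j) p *\<^sub>R G p))\<^sup>2)"
  have fe: "f j p = indicator (Ej j) p * gG p" for j p
    unfolding f_def gG_def by (simp add: indicator_def)
  have fi: "integrable N (f j)" for j
    unfolding f_def Ej_def by (rule weighted_inner(2)[OF sqi_GE sqi_GE meas_w w_b, of 1]) simp
  have g0: "p \<in> space N \<Longrightarrow> 0 \<le> gG p" for p unfolding gG_def using w_b by simp
  have fmono: "p \<in> space N \<Longrightarrow> f j p \<le> f (Suc j) p" for j p
    unfolding fe using g0[of p] Ej_mono[of j] by (auto simp: indicator_def)
  have mono: "AE p in N. mono (\<lambda>j. f j p)"
    by (rule AE_I2) (use fmono in \<open>auto intro: incseq_SucI\<close>)
  have lim: "AE p in N. (\<lambda>j. f j p) \<longlonglongrightarrow> uG p"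
  proof (rule AE_I2)
    fix p assume "p \<in> space N"
    show "(\<lambda>j. f j p) \<longlonglongrightarrow> uG p"
    proof (cases "p \<in> A")
      case True
      have "eventually (\<lambda>j. f j p = uG p) sequentially"
        using Ej_ev[OF True] by eventually_elim (use True in \<open>simp add: fe uG_def\<close>)
      thus ?thesis by (rule tendsto_eventually)
    next
      case False
      hence "f j p = uG p" for j unfolding fe uG_def using Ej_sub by (auto simp: indicator_def)
      thus ?thesis by simp
    qed
  qed
  have imono: "incseq (\<lambda>j. integral\<^sup>L N (f j))"
    by (rule incseq_SucI, rule integral_mono[OF fi fi]) (use fmono in simp)
  have ibound: "\<forall>j. integral\<^sup>L N (f j) \<le> C\<^sup>2"
  proof
    fix j show "integral\<^sup>L N (f j) \<le> C\<^sup>2" unfolding f_def Ej_def by (rule limbound) simp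
  qed
  obtain L where L: "(\<lambda>j. integral\<^sup>L N (f j)) \<longlonglongrightarrow> L" using incseq_convergent[OF imono ibound] by blast
  have gm: "gG \<in> borel_measurable (lebesgue_on A)" unfolding gG_def using G_meas_A w_meas_A by measurable
  have um: "uG \<in> borel_measurable N"
  proof -
    have "(\<lambda>p. indicator A p *\<^sub>R gG p) \<in> borel_measurable N" using restr_meas[OF OT_sets A_sets A_sub, of gG] gm by simp
    thus ?thesis unfolding uG_def by simp
  qed
  show ?thesis by (rule integrable_monotone_convergence[OF fi mono lim L um])
qed

lemma L2_f: "L2_on A (\<lambda>p. m (z p) *\<^sub>R G p)"
  unfolding L2_on_def
proof
  show mf: "(\<lambda>p. m (z p) *\<^sub>R G p) \<in> borel_measurable (lebesgue_on A)"
    using G_meas_A w_meas_A by measurable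
  let ?h = "\<lambda>p. (norm (m (z p) *\<^sub>R G p))\<^sup>2"
  have hm: "?h \<in> borel_measurable (lebesgue_on A)" using mf by measurable
  have hm2: "(\<lambda>p. indicator A p *\<^sub>R ?h p) \<in> borel_measurable N"
    using restr_meas[OF OT_sets A_sets A_sub, of ?h] hm by simp
  have bi: "integrable N (\<lambda>p. Mx * uG p)" using uG_int by simp
  have "integrable N (\<lambda>p. indicator A p *\<^sub>R ?h p)"
  proof (rule Bochner_Integration.integrable_bound[OF bi hm2], rule AE_I2)
    fix p assume "p \<in> space N"
    hence wb: "0 \<le> m (z p)" "m (z p) \<le> Mx" using w_b by auto
    have "(norm (m (z p) *\<^sub>R G p))\<^sup>2 = m (z p) * (m (z p) * (norm (G p))\<^sup>2)"
      by (simp add: power2_eq_square abs_mult)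
    also have "\<dots> \<le> Mx * (m (z p) * (norm (G p))\<^sup>2)"
      by (rule mult_right_mono) (use wb in auto)
    finally have le: "(norm (m (z p) *\<^sub>R G p))\<^sup>2 \<le> Mx * gG p" unfolding gG_def .
    have "0 \<le> Mx * gG p" using le by (meson order_trans zero_le_power2)
    thus "norm (indicator A p *\<^sub>R ?h p) \<le> norm (Mx * uG p)"
      using le unfolding uG_def by (auto simp: indicator_def)
  qed
  thus "integrable (lebesgue_on A) ?h" using restr_int(1)[OF OT_sets A_sets A_sub] by blast
qed

end



lemma inner_bound:
  assumes "sqi M f" "sqi M g" "t > 0"
  shows "\<bar>\<integral>x. f x \<bullet> g x \<partial>M\<bar> \<le> t/2 * (\<integral>x. (norm (f x))\<^sup>2 \<partial>M) + 1/(2*t) * (\<integral>x. (norm (g x))\<^sup>2 \<partial>M)"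
  using weighted_inner(3)[OF assms(1,2), of "\<lambda>_. 1" 1 t] assms(3) by simp

context msetup begin

lemma Ej_sets[simp]: "Ej j \<in> sets lebesgue" unfolding Ej_def by simp

lemma tail:
  assumes s\<gamma>: "sqi N \<gamma>" and van: "\<forall>p. p \<notin> A \<longrightarrow> \<gamma> p = 0"
  shows "(\<lambda>j. \<integral>p. (norm (indicator (A - Ej j) p *\<^sub>R \<gamma> p))\<^sup>2 \<partial>N) \<longlonglongrightarrow> 0"
proof -
  have sT: "sqi N (\<lambda>p. indicator (A - Ej j) p *\<^sub>R \<gamma> p)" for j
    by (rule sqi_ind[OF _ _ s\<gamma>]) (use A_sub in auto)
  have wi: "integrable N (\<lambda>p. (norm (\<gamma> p))\<^sup>2)" using s\<gamma> unfolding sqi_def by blast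
  have "(\<lambda>j. \<integral>p. (norm (indicator (A - Ej j) p *\<^sub>R \<gamma> p))\<^sup>2 \<partial>N) \<longlonglongrightarrow> (\<integral>p. 0 \<partial>N)"
  proof (rule integral_dominated_convergence[where w="\<lambda>p. (norm (\<gamma> p))\<^sup>2"])
    show "(\<lambda>p. 0::real) \<in> borel_measurable N" by simp
    show "(\<lambda>p. (norm (indicator (A - Ej j) p *\<^sub>R \<gamma> p))\<^sup>2) \<in> borel_measurable N" for j
      using sT[of j] unfolding sqi_def by (blast intro: borel_measurable_integrable)
    show "integrable N (\<lambda>p. (norm (\<gamma> p))\<^sup>2)" by (rule wi)
    show "AE p in N. (\<lambda>j. (norm (indicator (A - Ej j) p *\<^sub>R \<gamma> p))\<^sup>2) \<longlonglongrightarrow> 0"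
    proof (rule AE_I2)
      fix p assume "p \<in> space N"
      show "(\<lambda>j. (norm (indicator (A - Ej j) p *\<^sub>R \<gamma> p))\<^sup>2) \<longlonglongrightarrow> 0"
      proof (cases "p \<in> A")
        case True
        have "eventually (\<lambda>j. (norm (indicator (A - Ej j) p *\<^sub>R \<gamma> p))\<^sup>2 = 0) sequentially"
          using Ej_ev[OF True] by eventually_elim simp
        thus ?thesis by (rule tendsto_eventually)
      next
        case False thus ?thesis using van by simp
      qed
    qed
    show "AE p in N. norm ((norm (indicator (A - Ej j) p *\<^sub>R \<gamma> p))\<^sup>2) \<le> (norm (\<gamma> p))\<^sup>2" for j
      by (rule AE_I2) (simp add: indicator_def)
  qed
  thus ?thesis by simp
qed

lemma weak_part: "weak_L2_conv (F \<inter> \<Omega>T) (\<lambda>k p. m (zs k p) *\<^sub>R Gs k p) (\<lambda>p. m (z p) *\<^sub>R G p)"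
  unfolding FA weak_L2_conv_def
proof (intro conjI allI impI)
  fix k show "L2_on A (\<lambda>p. m (zs k p) *\<^sub>R Gs k p)"
    using sqi_restrict[OF OT_sets A_sets A_sub sqi_wG] unfolding L2_on_def sqi_def by blast
next
  show "L2_on A (\<lambda>p. m (z p) *\<^sub>R G p)" by (rule L2_f)
next
  fix g :: "'a \<times> real \<Rightarrow> 'a" assume "L2_on A g"
  hence sg: "sqi (lebesgue_on A) g" unfolding L2_on_def sqi_def by blast
  define \<gamma> where "\<gamma> = (\<lambda>p. indicator A p *\<^sub>R g p)"
  have s\<gamma>: "sqi N \<gamma>" unfolding \<gamma>_def using restr_sqi[OF OT_sets A_sets A_sub, of g] sg by blast
  have v\<gamma>: "\<forall>p. p \<notin> A \<longrightarrow> \<gamma> p = 0" unfolding \<gamma>_def by simp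
  define ff where "ff = (\<lambda>p. indicator A p *\<^sub>R (m (z p) *\<^sub>R G p))"
  have sff: "sqi N ff" unfolding ff_def using restr_sqi[OF OT_sets A_sets A_sub, of "\<lambda>p. m (z p) *\<^sub>R G p"] L2_f
    unfolding L2_on_def sqi_def by blast
  have c1: "(\<integral>p. (m (zs k p) *\<^sub>R Gs k p) \<bullet> g p \<partial>lebesgue_on A) = (\<integral>p. m (zs k p) * (Gs k p \<bullet> \<gamma> p) \<partial>N)" for k
  proof -
    have "(\<integral>p. (m (zs k p) *\<^sub>R Gs k p) \<bullet> g p \<partial>lebesgue_on A) = (\<integral>p. indicator A p *\<^sub>R ((m (zs k p) *\<^sub>R Gs k p) \<bullet> g p) \<partial>N)"
      by (rule restr_int(2)[OF OT_sets A_sets A_sub])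
    also have "(\<lambda>p. indicator A p *\<^sub>R ((m (zs k p) *\<^sub>R Gs k p) \<bullet> g p)) = (\<lambda>p. m (zs k p) * (Gs k p \<bullet> \<gamma> p))"
      unfolding \<gamma>_def by (auto simp: fun_eq_iff indicator_def)
    finally show ?thesis .
  qed
  have c2: "(\<integral>p. (m (z p) *\<^sub>R G p) \<bullet> g p \<partial>lebesgue_on A) = (\<integral>p. ff p \<bullet> \<gamma> p \<partial>N)"
  proof -
    have "(\<integral>p. (m (z p) *\<^sub>R G p) \<bullet> g p \<partial>lebesgue_on A) = (\<integral>p. indicator A p *\<^sub>R ((m (z p) *\<^sub>R G p) \<bullet> g p) \<partial>N)"
      by (rule restr_int(2)[OF OT_sets A_sets A_sub])
    also have "(\<lambda>p. indicator A p *\<^sub>R ((m (z p) *\<^sub>R G p) \<bullet> g p)) = (\<lambda>p. ff p \<bullet> \<gamma> p)"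
      unfolding \<gamma>_def ff_def by (auto simp: fun_eq_iff indicator_def)
    finally show ?thesis .
  qed
  show "(\<lambda>k. \<integral>p. (m (zs k p) *\<^sub>R Gs k p) \<bullet> g p \<partial>lebesgue_on A) \<longlonglongrightarrow> (\<integral>p. (m (z p) *\<^sub>R G p) \<bullet> g p \<partial>lebesgue_on A)"
    unfolding c1 c2
  proof (rule LIMSEQ_eps)
    fix e0 :: real assume e0: "e0 > 0"
    define e where "e = e0 / 3"
    have e: "e > 0" using e0 unfolding e_def by simp
    define K1 where "K1 = Mx * C\<^sup>2"
    define K2 where "K2 = (\<integral>p. (norm (ff p))\<^sup>2 \<partial>N)"
    have K1: "K1 \<ge> 0" unfolding K1_def using Mx(1) by simp
    have K2: "K2 \<ge> 0" unfolding K2_def by simp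
    define t where "t = e / (K1 + K2 + 1)"
    have KK: "K1 + K2 + 1 > 0" using K1 K2 by linarith
    have t: "t > 0" unfolding t_def using e KK by simp
    have te: "t * (K1 + K2) \<le> e"
    proof -
      have "t * (K1 + K2) \<le> t * (K1 + K2 + 1)" using t by simp
      also have "\<dots> = e" unfolding t_def using KK by simp
      finally show ?thesis .
    qed
    define T where "T = (\<lambda>j p. indicator (A - Ej j) p *\<^sub>R \<gamma> p)"
    have "t * e > 0" using t e by simp
    from order_tendstoD(2)[OF tail[OF s\<gamma> v\<gamma>] this]
    obtain j0 where "\<forall>j\<ge>j0. (\<integral>p. (norm (indicator (A - Ej j) p *\<^sub>R \<gamma> p))\<^sup>2 \<partial>N) < t * e"
      unfolding eventually_sequentially by blast
    hence j0: "(\<integral>p. (norm (T j0 p))\<^sup>2 \<partial>N) < t * e" unfolding T_def by blast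
    have sT: "sqi N (T j0)" unfolding T_def by (rule sqi_ind[OF _ _ s\<gamma>]) (use A_sub in auto)
    define \<delta> where "\<delta> = 1 / real (Suc j0)"
    have d: "\<delta> > 0" unfolding \<delta>_def by simp
    define \<phi> where "\<phi> = (\<lambda>p. indicator (Ej j0) p *\<^sub>R \<gamma> p)"
    have s\<phi>: "sqi N \<phi>" unfolding \<phi>_def by (rule sqi_ind[OF Ej_sets _ s\<gamma>]) (use Ej_sub A_sub in blast)
    have v\<phi>: "\<forall>p. p \<notin> E j0 \<delta> \<longrightarrow> \<phi> p = 0" unfolding \<phi>_def Ej_def \<delta>_def by simp
    note WW = weak_w[OF d s\<phi> v\<phi>]
    have split\<gamma>: "\<gamma> p = \<phi> p + T j0 p" for p
    proof (cases "p \<in> A")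
      case False
      hence "\<gamma> p = 0" using v\<gamma> by blast
      moreover have "p \<notin> Ej j0" using False Ej_sub by blast
      ultimately show ?thesis unfolding \<phi>_def T_def using False by simp
    next
      case True thus ?thesis unfolding \<phi>_def T_def by (cases "p \<in> Ej j0") (auto simp: indicator_def)
    qed
    have ffphi: "ff p \<bullet> \<phi> p = m (z p) * (G p \<bullet> \<phi> p)" for p
    proof (cases "p \<in> Ej j0")
      case True hence "p \<in> A" using Ej_sub by blast
      thus ?thesis unfolding ff_def \<phi>_def using True by simp
    next
      case False thus ?thesis unfolding ff_def \<phi>_def by simp
    qed
    have iA1: "integrable N (\<lambda>p. m (zs k p) * (Gs k p \<bullet> \<phi> p))" for k
      by (rule weighted_inner(1)[OF sqi_Gs s\<phi> meas_wk wk_b, of 1]) simp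
    have iA2: "integrable N (\<lambda>p. (m (zs k p) *\<^sub>R Gs k p) \<bullet> T j0 p)" for k by (rule sqi_inner_int[OF sqi_wG sT])
    have iB2: "integrable N (\<lambda>p. ff p \<bullet> T j0 p)" by (rule sqi_inner_int[OF sff sT])
    have eqA: "(\<integral>p. m (zs k p) * (Gs k p \<bullet> \<gamma> p) \<partial>N) = (\<integral>p. m (zs k p) * (Gs k p \<bullet> \<phi> p) \<partial>N) + (\<integral>p. (m (zs k p) *\<^sub>R Gs k p) \<bullet> T j0 p \<partial>N)" for k
    proof -
      have "(\<lambda>p. m (zs k p) * (Gs k p \<bullet> \<gamma> p)) = (\<lambda>p. m (zs k p) * (Gs k p \<bullet> \<phi> p) + (m (zs k p) *\<^sub>R Gs k p) \<bullet> T j0 p)"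
        unfolding split\<gamma> by (simp add: fun_eq_iff inner_add_right algebra_simps)
      thus ?thesis using Bochner_Integration.integral_add[OF iA1 iA2] by simp
    qed
    have eqB: "(\<integral>p. ff p \<bullet> \<gamma> p \<partial>N) = (\<integral>p. m (z p) * (G p \<bullet> \<phi> p) \<partial>N) + (\<integral>p. ff p \<bullet> T j0 p \<partial>N)"
    proof -
      have "(\<lambda>p. ff p \<bullet> \<gamma> p) = (\<lambda>p. m (z p) * (G p \<bullet> \<phi> p) + ff p \<bullet> T j0 p)"
        unfolding split\<gamma> by (simp add: fun_eq_iff inner_add_right ffphi)
      thus ?thesis using Bochner_Integration.integral_add[OF WW(1) iB2] by simp
    qed
    have bA: "\<bar>\<integral>p. (m (zs k p) *\<^sub>R Gs k p) \<bullet> T j0 p \<partial>N\<bar> \<le> t/2 * K1 + e/2" for k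
    proof -
      have "\<bar>\<integral>p. (m (zs k p) *\<^sub>R Gs k p) \<bullet> T j0 p \<partial>N\<bar> \<le> t/2 * (\<integral>p. (norm (m (zs k p) *\<^sub>R Gs k p))\<^sup>2 \<partial>N) + 1/(2*t) * (\<integral>p. (norm (T j0 p))\<^sup>2 \<partial>N)"
        by (rule inner_bound[OF sqi_wG sT t])
      moreover have "(\<integral>p. (norm (m (zs k p) *\<^sub>R Gs k p))\<^sup>2 \<partial>N) \<le> K1"
      proof -
        have i1: "integrable N (\<lambda>p. (norm (m (zs k p) *\<^sub>R Gs k p))\<^sup>2)" using sqi_wG unfolding sqi_def by blast
        have i2: "integrable N (\<lambda>p. Mx * (m (zs k p) * (norm (Gs k p))\<^sup>2))" using wbound(1) by simp
        have "(\<integral>p. (norm (m (zs k p) *\<^sub>R Gs k p))\<^sup>2 \<partial>N) \<le> (\<integral>p. Mx * (m (zs k p) * (norm (Gs k p))\<^sup>2) \<partial>N)"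
        proof (rule integral_mono[OF i1 i2])
          fix p assume "p \<in> space N"
          hence wb: "0 \<le> m (zs k p)" "m (zs k p) \<le> Mx" using wk_b by auto
          have "(norm (m (zs k p) *\<^sub>R Gs k p))\<^sup>2 = m (zs k p) * (m (zs k p) * (norm (Gs k p))\<^sup>2)"
            by (simp add: power2_eq_square abs_mult)
          also have "\<dots> \<le> Mx * (m (zs k p) * (norm (Gs k p))\<^sup>2)"
            by (rule mult_right_mono) (use wb in auto)
          finally show "(norm (m (zs k p) *\<^sub>R Gs k p))\<^sup>2 \<le> Mx * (m (zs k p) * (norm (Gs k p))\<^sup>2)" .
        qed
        also have "\<dots> = Mx * (\<integral>p. m (zs k p) * (norm (Gs k p))\<^sup>2 \<partial>N)" by simp
        also have "\<dots> \<le> Mx * C\<^sup>2" using wbound(2) Mx(1) by (intro mult_left_mono) auto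
        finally show ?thesis unfolding K1_def .
      qed
      moreover have "1/(2*t) * (\<integral>p. (norm (T j0 p))\<^sup>2 \<partial>N) \<le> e/2"
      proof -
        have "1/(2*t) * (\<integral>p. (norm (T j0 p))\<^sup>2 \<partial>N) \<le> 1/(2*t) * (t * e)"
          using j0 t by (intro mult_left_mono) auto
        also have "\<dots> = e/2" using t by simp
        finally show ?thesis .
      qed
      moreover have "t/2 * (\<integral>p. (norm (m (zs k p) *\<^sub>R Gs k p))\<^sup>2 \<partial>N) \<le> t/2 * K1"
        using calculation(2) t by (intro mult_left_mono) auto
      ultimately show ?thesis by linarith
    qed
    have bB: "\<bar>\<integral>p. ff p \<bullet> T j0 p \<partial>N\<bar> \<le> t/2 * K2 + e/2"
    proof -
      have "\<bar>\<integral>p. ff p \<bullet> T j0 p \<partial>N\<bar> \<le> t/2 * K2 + 1/(2*t) * (\<integral>p. (norm (T j0 p))\<^sup>2 \<partial>N)"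
        unfolding K2_def by (rule inner_bound[OF sff sT t])
      moreover have "1/(2*t) * (\<integral>p. (norm (T j0 p))\<^sup>2 \<partial>N) \<le> e/2"
      proof -
        have "1/(2*t) * (\<integral>p. (norm (T j0 p))\<^sup>2 \<partial>N) \<le> 1/(2*t) * (t * e)"
          using j0 t by (intro mult_left_mono) auto
        also have "\<dots> = e/2" using t by simp
        finally show ?thesis .
      qed
      ultimately show ?thesis by linarith
    qed
    have ev: "eventually (\<lambda>k. dist (\<integral>p. m (zs k p) * (Gs k p \<bullet> \<phi> p) \<partial>N) (\<integral>p. m (z p) * (G p \<bullet> \<phi> p) \<partial>N) < e) sequentially"
      by (rule tendstoD[OF WW(2) e])
    show "eventually (\<lambda>k. \<bar>(\<integral>p. m (zs k p) * (Gs k p \<bullet> \<gamma> p) \<partial>N) - (\<integral>p. ff p \<bullet> \<gamma> p \<partial>N)\<bar> \<le> e0) sequentially"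
      using ev
    proof eventually_elim
      case (elim k)
      have "\<bar>(\<integral>p. m (zs k p) * (Gs k p \<bullet> \<gamma> p) \<partial>N) - (\<integral>p. ff p \<bullet> \<gamma> p \<partial>N)\<bar>
          \<le> \<bar>(\<integral>p. m (zs k p) * (Gs k p \<bullet> \<phi> p) \<partial>N) - (\<integral>p. m (z p) * (G p \<bullet> \<phi> p) \<partial>N)\<bar>
            + \<bar>\<integral>p. (m (zs k p) *\<^sub>R Gs k p) \<bullet> T j0 p \<partial>N\<bar> + \<bar>\<integral>p. ff p \<bullet> T j0 p \<partial>N\<bar>"
        unfolding eqA eqB by linarith
      also have "\<dots> \<le> e + (t/2 * K1 + e/2) + (t/2 * K2 + e/2)"
        using elim bA[of k] bB unfolding dist_real_def by linarith
      also have "\<dots> = 2*e + (t*(K1+K2))/2" by (simp add: algebra_simps)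
      also have "\<dots> \<le> e0" using te e unfolding e_def by linarith
      finally show ?case .
    qed
  qed
qed

end

theorem mainTheorem11:
  fixes \<Omega> :: "'a::euclidean_space set"
    and T C :: real
    and m :: "real \<Rightarrow> real"
    and eps :: "nat \<Rightarrow> real"
    and zs :: "nat \<Rightarrow> 'a \<times> real \<Rightarrow> real" and z :: "'a \<times> real \<Rightarrow> real"
    and mus :: "nat \<Rightarrow> 'a \<times> real \<Rightarrow> real" and Gs :: "nat \<Rightarrow> 'a \<times> real \<Rightarrow> 'a"
    and mu :: "'a \<times> real \<Rightarrow> real" and G :: "'a \<times> real \<Rightarrow> 'a"
    and ts :: "nat \<Rightarrow> real" and U :: "nat \<Rightarrow> nat \<Rightarrow> 'a set"
    and \<Omega>T F :: "('a \<times> real) set"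
  assumes dom: "C2_domain \<Omega>" "bounded \<Omega>"
    and T: "T > 0"
    and \<Omega>T_def: "\<Omega>T = \<Omega> \<times> {0<..<T}"
    and m_cont: "continuous_on {0..1} m"
    and m_nonneg: "\<forall>s\<in>{0..1}. m s \<ge> 0"
    and m_zero: "\<forall>s\<in>{0..1}. m s = 0 \<longleftrightarrow> s = 0"
    and eps_pos: "\<forall>k. eps k > 0" and eps_lim: "eps \<longlonglongrightarrow> 0"
    and zs_cont: "\<forall>k. continuous_on (closure \<Omega>T) (zs k)"
    and zs_range: "\<forall>k. \<forall>p\<in>closure \<Omega>T. 0 \<le> zs k p \<and> zs k p \<le> 1"
    and zs_lim: "uniform_limit (closure \<Omega>T) zs z sequentially"
    and mus_reg: "\<forall>k. L2H1 \<Omega> T (mus k) (Gs k)"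
    and bound: "\<forall>k. (\<integral>p. (m (zs k p) + eps k) * (norm (Gs k p))\<^sup>2 \<partial>lebesgue_on \<Omega>T) \<le> C\<^sup>2"
    and F_def: "F = {p \<in> closure \<Omega>T. z p > 0}"
    and ts_range: "range ts \<subseteq> {0..T}" and ts_dense: "{0..T} \<subseteq> closure (range ts)"
    and ts_T: "T \<in> range ts"
    and U_fine: "\<forall>j. fine_rep \<Omega> {x. (x, ts j) \<in> F} (U j)"
    and mu_lim: "\<forall>j k. weak_L2H1_conv (U j k) (ts j) mus Gs mu G"
  shows "weak_L2_conv (F \<inter> \<Omega>T) (\<lambda>k p. m (zs k p) *\<^sub>R Gs k p) (\<lambda>p. m (z p) *\<^sub>R G p)
       \<and> strong_L2_conv (\<Omega>T - F) (\<lambda>k p. m (zs k p) *\<^sub>R Gs k p) (\<lambda>p. 0)"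
proof -
  interpret msetup \<Omega> T C m eps zs z mus Gs mu G ts U \<Omega>T F
    by (rule msetup.intro) (fact assms)+
  show ?thesis using weak_part strong_part by blast
qed

end
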